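(* For every nonnegative integer $n$, $$\sum_{F\in F_n}\mathbf{q}^{\operatorname{tinv}(F)}c^{\operatorname{tree}(F)}=\sum_{P\in PF_n}\mathbf{q}^{\operatorname{tjump}(P)}c^{\operatorname{critic}(P)},$$ where $\mathbf{q}=(q_0,q_1,\dots,q_n)$ are indeterminates and $\mathbf{q}^{(v_0,\dots,v_n)}=q_0^{v_0}q_1^{v_1}\cdots q_n^{v_n}$.
   Context: $F_n$ is the set of rooted forests on the vertex set $\{1,\dots,n\}$ (graphs whose components are trees, each with a distinguished root). A vertex $j$ is a descendant of $i$ if $j\neq i$ and $i$ lies on the path from the root of its component to $j$. $\operatorname{inv}(F:v)$ is the number of descendants $x$ of $v$ with $x<v$; $\operatorname{lead}_i(F)$ is the number of vertices $v$ with $\operatorname{inv}(F:v)=i$; $\operatorname{tinv}(F)=(\operatorname{lead}_0(F),\dots,\operatorname{lead}_n(F))$; $\operatorname{tree}(F)$ is the number of trees of $F$. Parking algorithm: for a sequence $(p_1,\dots,p_n)$ of positive integers, cars $1,\dots,n$ park in turn, car $c$ taking the first empty space among $p_c,p_c+1,\dots$; let $q_c$ be its space. $PF_n$ is the set of such sequences with all $q_c\le n$ (parking functions). $\operatorname{jump}(P:c)=q_c-p_c$; $\operatorname{lucky}_i(P)$ is the number of cars with $\operatorname{jump}(P:c)=i$; $\operatorname{tjump}(P)=(\operatorname{lucky}_0(P),\dots,\operatorname{lucky}_n(P))$. A car $c$ is critical if at the moment it parks all spaces $q_c+1,\dots,n$ are occupied; $\operatorname{critic}(P)$ is the number of critical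 cars. *)

theory Defs
  imports Main
begin

text \<open>A rooted forest on vertex set {1..n} is encoded by its parent map
  par :: nat => nat: par v is the parent of v, and par v = 0 iff v is a root.
  Outside {1..n} the map is 0 (so that the encoding is unique).
  Acyclicity: iterating par from any vertex eventually reaches 0 (past a root).\<close>

definition rooted_forests :: "nat \<Rightarrow> (nat \<Rightarrow> nat) set" where
  "rooted_forests n = {par.
      (\<forall>v. v \<notin> {1..n} \<longrightarrow> par v = 0) \<and>
      (\<forall>v\<in>{1..n}. par v \<le> n \<and> (\<exists>k. (par ^^ k) v = 0))}"

definition descendant :: "(nat \<Rightarrow> nat) \<Rightarrow> nat \<Rightarrow> nat \<Rightarrow> bool" where
  "descendant par j i \<longleftrightarrow> j \<noteq> i \<and> i \<noteq> 0 \<and> (\<exists>k\<ge>1. (par ^^ k) j = i)"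

definition inv_f :: "nat \<Rightarrow> (nat \<Rightarrow> nat) \<Rightarrow> nat \<Rightarrow> nat" where
  "inv_f n par v = card {x\<in>{1..n}. descendant par x v \<and> x < v}"

definition lead :: "nat \<Rightarrow> (nat \<Rightarrow> nat) \<Rightarrow> nat \<Rightarrow> nat" where
  "lead n par i = card {v\<in>{1..n}. inv_f n par v = i}"

definition tree_count :: "nat \<Rightarrow> (nat \<Rightarrow> nat) \<Rightarrow> nat" where
  "tree_count n par = card {v\<in>{1..n}. par v = 0}"

definition monom_q :: "nat \<Rightarrow> (nat \<Rightarrow> 'a::comm_semiring_1) \<Rightarrow> (nat \<Rightarrow> nat) \<Rightarrow> 'a" where
  "monom_q n q v = (\<Prod>i\<le>n. q i ^ v i)"

text \<open>Preference sequences are lists; car c (1-based) is list index c-1.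
  park_aux occ prefs returns the spaces taken, given occupied spaces occ.\<close>
fun park_aux :: "nat set \<Rightarrow> nat list \<Rightarrow> nat list" where
  "park_aux occ [] = []"
| "park_aux occ (a # as) =
     (let s = (LEAST s. a \<le> s \<and> s \<notin> occ) in s # park_aux (insert s occ) as)"

definition spaces :: "nat list \<Rightarrow> nat list" where
  "spaces P = park_aux {} P"

definition parking_functions :: "nat \<Rightarrow> nat list set" where
  "parking_functions n = {P. length P = n \<and> (\<forall>x\<in>set P. 1 \<le> x) \<and>
                            (\<forall>s\<in>set (spaces P). s \<le> n)}"

definition jump :: "nat list \<Rightarrow> nat \<Rightarrow> nat" where
  "jump P c = spaces P ! c - P ! c"

definition lucky :: "nat list \<Rightarrow> nat \<Rightarrow> nat" where
  "lucky P i = card {c. c < length P \<and> jump P c = i}"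

definition critical :: "nat \<Rightarrow> nat list \<Rightarrow> nat \<Rightarrow> bool" where
  "critical n P c \<longleftrightarrow> {spaces P ! c + 1 .. n} \<subseteq> set (take c (spaces P))"

definition critic :: "nat \<Rightarrow> nat list \<Rightarrow> nat" where
  "critic n P = card {c. c < length P \<and> critical n P c}"

end

theory Submission
  imports Defs
begin

section \<open>Parking side\<close>

lemma length_park_aux[simp]: "length (park_aux occ xs) = length xs"
  by (induction xs arbitrary: occ) (auto simp: Let_def)

lemma park_aux_snoc:
  "park_aux occ (xs @ [p]) = park_aux occ xs @ [LEAST t. p \<le> t \<and> t \<notin> occ \<union> set (park_aux occ xs)]"
  by (induction xs arbitrary: occ) (auto simp: Let_def)

lemma spaces_snoc:
  "spaces (xs @ [p]) = spaces xs @ [LEAST t. p \<le> t \<and> t \<notin> set (spaces xs)]"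
  unfolding spaces_def by (simp add: park_aux_snoc)

lemma length_spaces[simp]: "length (spaces xs) = length xs"
  by (simp add: spaces_def)

lemma ex_free: "finite B \<Longrightarrow> \<exists>t::nat. p \<le> t \<and> t \<notin> B"
proof -
  assume "finite B"
  then obtain M where "\<forall>x\<in>B. x \<le> M" using finite_nat_set_iff_bounded_le by blast
  then show ?thesis by (intro exI[of _ "p + M + 1"]) auto
qed

lemma Least_free_eq:
  assumes "finite B"
  shows "((LEAST t::nat. p \<le> t \<and> t \<notin> B) = s) \<longleftrightarrow> (p \<le> s \<and> s \<notin> B \<and> {p..<s} \<subseteq> B)"
proof
  assume h: "(LEAST t::nat. p \<le> t \<and> t \<notin> B) = s"
  from LeastI_ex[OF ex_free[OF assms, of p]] h have "p \<le> s \<and> s \<notin> B" by simp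
  moreover have "{p..<s} \<subseteq> B"
  proof
    fix t assume "t \<in> {p..<s}"
    then show "t \<in> B" using not_less_Least[of t "\<lambda>t. p \<le> t \<and> t \<notin> B"] h by auto
  qed
  ultimately show "p \<le> s \<and> s \<notin> B \<and> {p..<s} \<subseteq> B" by blast
next
  assume h: "p \<le> s \<and> s \<notin> B \<and> {p..<s} \<subseteq> B"
  show "(LEAST t::nat. p \<le> t \<and> t \<notin> B) = s"
    by (rule Least_equality) (use h in \<open>auto simp: subset_iff not_le\<close>)
qed

lemma park_aux_props:
  "finite occ \<Longrightarrow> distinct (park_aux occ xs) \<and> set (park_aux occ xs) \<inter> occ = {}
     \<and> (\<forall>i<length xs. xs ! i \<le> park_aux occ xs ! i)"
proof (induction xs arbitrary: occ)
  case Nil then show ?case by simp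
next
  case (Cons a as)
  define s where "s = (LEAST s. a \<le> s \<and> s \<notin> occ)"
  have s: "a \<le> s" "s \<notin> occ" using LeastI_ex[OF ex_free[OF Cons.prems, of a]] s_def by auto
  have IH: "distinct (park_aux (insert s occ) as) \<and> set (park_aux (insert s occ) as) \<inter> insert s occ = {}
     \<and> (\<forall>i<length as. as ! i \<le> park_aux (insert s occ) as ! i)"
    using Cons.IH Cons.prems by simp
  have e: "park_aux occ (a # as) = s # park_aux (insert s occ) as" by (simp add: s_def Let_def)
  show ?case unfolding e using IH s
    by (auto simp: nth_Cons split: nat.splits)
qed

definition Jw :: "(nat \<Rightarrow> 'a::comm_semiring_1) \<Rightarrow> nat set \<Rightarrow> nat \<Rightarrow> 'a" where
  "Jw q A s = (\<Sum>j\<in>{j. j < s \<and> {s-j..<s} \<subseteq> A}. q j)"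

definition crw :: "'a::comm_semiring_1 \<Rightarrow> nat \<Rightarrow> nat set \<Rightarrow> nat \<Rightarrow> 'a" where
  "crw c N A s = (if {Suc s..N} \<subseteq> A then c else 1)"

primrec Wn :: "'a::comm_semiring_1 \<Rightarrow> (nat \<Rightarrow> 'a) \<Rightarrow> nat \<Rightarrow> nat \<Rightarrow> nat set \<Rightarrow> 'a" where
  "Wn c q N 0 A = 1"
| "Wn c q N (Suc k) A = (\<Sum>s\<in>A. Wn c q N k (A - {s}) * Jw q A s * crw c N A s)"

definition W :: "'a::comm_semiring_1 \<Rightarrow> (nat \<Rightarrow> 'a) \<Rightarrow> nat \<Rightarrow> nat set \<Rightarrow> 'a" where
  "W c q N A = Wn c q N (card A) A"

lemma W_empty[simp]: "W c q N {} = 1"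
  by (simp add: W_def)

lemma W_unfold:
  assumes "finite A" "A \<noteq> {}"
  shows "W c q N A = (\<Sum>s\<in>A. W c q N (A - {s}) * Jw q A s * crw c N A s)"
proof -
  obtain k where k: "card A = Suc k" using assms by (cases "card A") auto
  have "W c q N A = (\<Sum>s\<in>A. Wn c q N k (A - {s}) * Jw q A s * crw c N A s)"
    by (simp add: W_def k)
  also have "\<dots> = (\<Sum>s\<in>A. W c q N (A - {s}) * Jw q A s * crw c N A s)"
    by (rule sum.cong) (use k assms in \<open>auto simp: W_def\<close>)
  finally show ?thesis .
qed

definition PL :: "nat set \<Rightarrow> nat list set" where
  "PL A = {P. length P = card A \<and> (\<forall>x\<in>set P. 1 \<le> x) \<and> set (spaces P) = A}"

definition wt :: "'a::comm_semiring_1 \<Rightarrow> (nat \<Rightarrow> 'a) \<Rightarrow> nat \<Rightarrow> nat list \<Rightarrow> 'a" where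
  "wt c q N P = (\<Prod>i<length P. q (jump P i)) * c ^ critic N P"

lemma spaces_snoc_nth:
  "i < length xs \<Longrightarrow> spaces (xs @ [p]) ! i = spaces xs ! i"
  by (simp add: spaces_snoc nth_append)

lemma jump_snoc: "i < length xs \<Longrightarrow> jump (xs @ [p]) i = jump xs i"
  by (simp add: jump_def spaces_snoc_nth nth_append)

lemma critical_snoc: "i < length xs \<Longrightarrow> critical N (xs @ [p]) i = critical N xs i"
  by (simp add: critical_def spaces_snoc nth_append)

lemma wt_snoc:
  assumes "spaces (xs @ [p]) ! length xs = s"
  shows "wt c q N (xs @ [p]) = wt c q N xs * q (s - p) *
     (if {Suc s..N} \<subseteq> set (spaces xs) then c else 1)"
proof -
  have j: "jump (xs @ [p]) (length xs) = s - p" using assms by (simp add: jump_def)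
  have cr: "critical N (xs @ [p]) (length xs) = ({Suc s..N} \<subseteq> set (spaces xs))"
    using assms by (simp add: critical_def spaces_snoc)
  have pr: "(\<Prod>i<length (xs@[p]). q (jump (xs @ [p]) i)) = (\<Prod>i<length xs. q (jump xs i)) * q (s - p)"
    by (simp add: j jump_snoc)
  have set: "{i. i < length (xs@[p]) \<and> critical N (xs @ [p]) i} =
     {i. i < length xs \<and> critical N xs i} \<union> (if critical N (xs @ [p]) (length xs) then {length xs} else {})"
    by (auto simp: critical_snoc less_Suc_eq)
  have "critic N (xs @ [p]) = critic N xs + (if critical N (xs @ [p]) (length xs) then 1 else 0)"
    unfolding critic_def set by (auto simp: card_insert_if)
  then show ?thesis unfolding wt_def pr cr by (auto simp: algebra_simps)
qed

lemma PL_empty: "PL {} = {[]}"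
  by (auto simp: PL_def spaces_def)

lemma PL_sum:
  "finite A \<Longrightarrow> 0 \<notin> A \<Longrightarrow> finite (PL A) \<and> (\<Sum>P\<in>PL A. wt c q N P) = W c q N A"
proof (induction "card A" arbitrary: A)
  case 0
  then have "A = {}" by simp
  then show ?case by (simp add: PL_empty wt_def critic_def)
next
  case (Suc k A)
  define Js where "Js s = {j. j < s \<and> {s-j..<s} \<subseteq> A}" for s
  define S where "S = (SIGMA s:A. PL (A - {s}) \<times> Js s)"
  define fw where "fw = (\<lambda>(s::nat, xs::nat list, j::nat). xs @ [s - j])"
  define iv where "iv = (\<lambda>P. (last (spaces P), butlast P, last (spaces P) - last P))"
  have IH: "finite (PL (A - {s})) \<and> (\<Sum>P\<in>PL (A - {s}). wt c q N P) = W c q N (A - {s})"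
    if "s \<in> A" for s
    using Suc that by (intro Suc.hyps) auto
  have finJ: "finite (Js s)" for s unfolding Js_def by auto
  have finS: "finite S" unfolding S_def using IH finJ Suc.prems by auto
  have key: "spaces (xs @ [s - j]) = spaces xs @ [s] \<and> xs @ [s-j] \<in> PL A"
    if "s \<in> A" "xs \<in> PL (A - {s})" "j \<in> Js s" for s xs j
  proof -
    have B: "set (spaces xs) = A - {s}" "length xs = card (A - {s})" "\<forall>x\<in>set xs. 1 \<le> x"
      using that(2) by (auto simp: PL_def)
    have "(LEAST t. s - j \<le> t \<and> t \<notin> set (spaces xs)) = s"
      using that(3) B(1) Suc.prems by (subst Least_free_eq) (auto simp: Js_def)
    then have sp: "spaces (xs @ [s - j]) = spaces xs @ [s]" by (simp add: spaces_snoc)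
    have "card A = Suc (card (A - {s}))" using that(1) Suc.prems
      by (metis card_Suc_Diff1)
    then show ?thesis using sp B that(1,3) by (auto simp: PL_def Js_def)
  qed
  have inv1: "iv (fw t) = t" if "t \<in> S" for t
    using that key unfolding S_def fw_def iv_def Js_def by (auto simp: spaces_snoc)
  have fwin: "fw t \<in> PL A" if "t \<in> S" for t
    using that key unfolding S_def fw_def by auto
  have inv2: "fw (iv P) = P \<and> iv P \<in> S" if "P \<in> PL A" for P
  proof -
    have P: "length P = card A" "\<forall>x\<in>set P. 1 \<le> x" "set (spaces P) = A"
      using that by (auto simp: PL_def)
    then have "P \<noteq> []" using Suc.hyps(2) by auto
    then obtain xs p where Pe: "P = xs @ [p]" by (metis append_butlast_last_id)
    define s where "s = (LEAST t. p \<le> t \<and> t \<notin> set (spaces xs))"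
    have sp: "spaces P = spaces xs @ [s]" unfolding Pe s_def by (simp add: spaces_snoc)
    have ps: "p \<le> s \<and> s \<notin> set (spaces xs) \<and> {p..<s} \<subseteq> set (spaces xs)"
      using Least_free_eq[of "set (spaces xs)" p s] s_def by simp
    have sA: "s \<in> A" using P(3) sp by auto
    have sxs: "set (spaces xs) = A - {s}" using P(3) sp ps by auto
    have "card A = Suc (card (A - {s}))" using sA Suc.prems by (metis card_Suc_Diff1)
    then have xsPL: "xs \<in> PL (A - {s})" using P sxs unfolding Pe PL_def by auto
    have p1: "1 \<le> p" using P(2) Pe by auto
    have "s - p \<in> Js s" using ps p1 sxs unfolding Js_def by auto
    moreover have "iv P = (s, xs, s - p)" unfolding iv_def sp by (simp add: Pe)
    ultimately show ?thesis using xsPL sA ps unfolding S_def fw_def by (auto simp: Pe)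
  qed
  have img: "PL A = fw ` S"
    using fwin inv2 by (auto) (metis image_eqI)
  have "(\<Sum>P\<in>PL A. wt c q N P) = (\<Sum>t\<in>S. (case t of (s, xs, j) \<Rightarrow> wt c q N xs * q j * crw c N A s))"
  proof (rule sum.reindex_bij_witness[where i = iv and j = fw, symmetric])
    fix t assume t: "t \<in> S"
    then obtain s xs j where te: "t = (s, xs, j)" and s: "s \<in> A" "xs \<in> PL (A - {s})" "j \<in> Js s"
      unfolding S_def by auto
    have sp: "spaces (xs @ [s - j]) ! length xs = s" using key[OF s] by (simp add: nth_append)
    have "{Suc s..N} \<subseteq> set (spaces xs) \<longleftrightarrow> {Suc s..N} \<subseteq> A"
      using s(2) by (auto simp: PL_def)
    moreover have "s - (s - j) = j" using s(3) by (auto simp: Js_def)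
    ultimately show "wt c q N (fw t) = (case t of (s, xs, j) \<Rightarrow> wt c q N xs * q j * crw c N A s)"
      unfolding te fw_def by (simp add: wt_snoc[OF sp] crw_def)
  qed (use inv1 fwin inv2 in auto)
  also have "\<dots> = (\<Sum>s\<in>A. \<Sum>(xs, j)\<in>PL (A - {s}) \<times> Js s. wt c q N xs * q j * crw c N A s)"
    unfolding S_def using IH finJ Suc.prems
    by (subst sum.Sigma) (auto simp: split_def)
  also have "\<dots> = (\<Sum>s\<in>A. W c q N (A - {s}) * Jw q A s * crw c N A s)"
  proof (rule sum.cong[OF refl])
    fix s assume s: "s \<in> A"
    have "(\<Sum>(xs, j)\<in>PL (A - {s}) \<times> Js s. wt c q N xs * q j * crw c N A s)
        = (\<Sum>xs\<in>PL (A - {s}). \<Sum>j\<in>Js s. wt c q N xs * q j) * crw c N A s"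
      by (simp add: sum.cartesian_product[symmetric] sum_distrib_right)
    also have "\<dots> = (\<Sum>xs\<in>PL (A - {s}). wt c q N xs) * (\<Sum>j\<in>Js s. q j) * crw c N A s"
      by (simp add: sum_product)
    also have "\<dots> = W c q N (A - {s}) * Jw q A s * crw c N A s"
      using IH[OF s] by (simp add: Jw_def Js_def)
    finally show "(\<Sum>(xs, j)\<in>PL (A - {s}) \<times> Js s. wt c q N xs * q j * crw c N A s)
        = W c q N (A - {s}) * Jw q A s * crw c N A s" .
  qed
  also have "\<dots> = W c q N A"
    using Suc.prems Suc.hyps(2) by (subst W_unfold) auto
  finally show ?case using img finS by auto
qed

lemma monom_prod:
  fixes q :: "nat \<Rightarrow> 'a::comm_semiring_1"
  assumes "finite S" "\<forall>a\<in>S. f a \<le> n"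
  shows "(\<Prod>i\<le>n. q i ^ card {a\<in>S. f a = i}) = (\<Prod>a\<in>S. q (f a))"
proof -
  have "(\<Prod>a\<in>S. q (f a)) = (\<Prod>y\<in>{..n}. \<Prod>a\<in>{x\<in>S. f x = y}. q (f a))"
    using assms by (intro prod.group[symmetric]) auto
  also have "\<dots> = (\<Prod>i\<le>n. q i ^ card {a\<in>S. f a = i})"
  proof (rule prod.cong[OF refl])
    fix i assume "i \<in> {..n}"
    have "(\<Prod>a\<in>{x\<in>S. f x = i}. q (f a)) = (\<Prod>a\<in>{x\<in>S. f x = i}. q i)"
      by (rule prod.cong) auto
    then show "(\<Prod>a\<in>{x\<in>S. f x = i}. q (f a)) = q i ^ card {a\<in>S. f a = i}" by simp
  qed
  finally show ?thesis by simp
qed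

lemma PF_eq_PL: "parking_functions n = PL {1..n}"
proof
  show "parking_functions n \<subseteq> PL {1..n}"
  proof
    fix P assume "P \<in> parking_functions n"
    then have P: "length P = n" "\<forall>x\<in>set P. 1 \<le> x" "\<forall>s\<in>set (spaces P). s \<le> n"
      by (auto simp: parking_functions_def)
    have pr: "distinct (spaces P)" "\<forall>i<length P. P ! i \<le> spaces P ! i"
      using park_aux_props[of "{}" P] by (auto simp: spaces_def)
    have "set (spaces P) \<subseteq> {1..n}"
    proof
      fix s assume s: "s \<in> set (spaces P)"
      then obtain i where i: "i < length P" "spaces P ! i = s" by (auto simp: in_set_conv_nth)
      have "1 \<le> P ! i" using P(2) i(1) by auto
      then show "s \<in> {1..n}" using pr(2) i P(3) s by force
    qed
    moreover have "card (set (spaces P)) = n" using pr(1) P(1) by (simp add: distinct_card)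
    ultimately have "set (spaces P) = {1..n}" by (intro card_subset_eq) auto
    then show "P \<in> PL {1..n}" using P by (simp add: PL_def)
  qed
next
  show "PL {1..n} \<subseteq> parking_functions n"
    by (auto simp: PL_def parking_functions_def)
qed

lemma parking_side:
  fixes q :: "nat \<Rightarrow> 'a::comm_semiring_1"
  shows "(\<Sum>P\<in>parking_functions n. monom_q n q (lucky P) * c ^ critic n P) = W c q n {1..n}"
proof -
  have "(\<Sum>P\<in>parking_functions n. monom_q n q (lucky P) * c ^ critic n P)
      = (\<Sum>P\<in>PL {1..n}. wt c q n P)"
  proof (rule sum.cong)
    fix P assume "P \<in> PL {1..n}"
    then have "P \<in> parking_functions n" using PF_eq_PL by blast
    then have P: "P \<in> PL {1..n}" "\<forall>s\<in>set (spaces P). s \<le> n" "length P = n"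
      using PF_eq_PL by (auto simp: parking_functions_def)
    have "\<forall>a\<in>{..<length P}. jump P a \<le> n"
    proof
      fix a assume "a \<in> {..<length P}"
      then have "spaces P ! a \<in> set (spaces P)" by simp
      then have "spaces P ! a \<le> n" using P(2) by blast
      then show "jump P a \<le> n" unfolding jump_def by simp
    qed
    then have "(\<Prod>i\<le>n. q i ^ card {a\<in>{..<length P}. jump P a = i}) = (\<Prod>a<length P. q (jump P a))"
      using monom_prod[of "{..<length P}" "jump P" n q] by blast
    moreover have "{a\<in>{..<length P}. jump P a = i} = {c. c < length P \<and> jump P c = i}" for i by auto
    ultimately have "monom_q n q (lucky P) = (\<Prod>a<length P. q (jump P a))"
      unfolding monom_q_def lucky_def by simp
    then show "monom_q n q (lucky P) * c ^ critic n P = wt c q n P" by (simp add: wt_def)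
  qed (fact PF_eq_PL)
  also have "\<dots> = W c q n {1..n}" using PL_sum[of "{1..n}" c q n] by simp
  finally show ?thesis .
qed

lemma Jw_split_L:
  assumes "\<forall>x\<in>L. x < s" "\<forall>x\<in>U. s < x" "t \<in> L"
  shows "Jw q (L \<union> U) t = Jw q L t"
proof -
  have nU: "x \<notin> U" if "x < t" for x
  proof
    assume "x \<in> U"
    then have "s < x" using assms(2) by blast
    moreover have "t < s" using assms(1,3) by blast
    ultimately show False using that by simp
  qed
  have "{t-j..<t} \<subseteq> L \<union> U \<longleftrightarrow> {t-j..<t} \<subseteq> L" for j
    using nU by (auto simp: subset_iff)
  then show ?thesis by (simp add: Jw_def)
qed

lemma Jw_split_U:
  assumes "\<forall>x\<in>L. x < s" "\<forall>x\<in>U. s < x" "t \<in> U"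
  shows "Jw q (L \<union> U) t = Jw q U t"
proof -
  have st: "s < t" using assms by blast
  have sn: "s \<notin> L \<union> U" using assms(1,2) by blast
  have "{t-j..<t} \<subseteq> L \<union> U \<longleftrightarrow> {t-j..<t} \<subseteq> U" for j
  proof
    assume h: "{t-j..<t} \<subseteq> L \<union> U"
    show "{t-j..<t} \<subseteq> U"
    proof (cases "t - j \<le> s")
      case True
      then have "s \<in> {t-j..<t}" using st by simp
      then show ?thesis using h sn by blast
    next
      case False
      have "x \<notin> L" if "x \<in> {t-j..<t}" for x
      proof
        assume "x \<in> L"
        then have "x < s" using assms(1) by blast
        moreover have "s < x" using that False by simp
        ultimately show False by simp
      qed
      then show ?thesis using h by blast
    qed
  qed auto
  then show ?thesis by (simp add: Jw_def)
qed

lemma crw_split_L: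
  assumes "\<forall>x\<in>L. x < s" "\<forall>x\<in>U. s < x" "t \<in> L" "s \<le> N"
  shows "crw c N (L \<union> U) t = crw c N L t"
proof -
  have "t < s" using assms by blast
  then have "s \<in> {Suc t..N}" using assms(4) by simp
  moreover have "s \<notin> L \<union> U" using assms(1,2) by blast
  ultimately have "\<not> {Suc t..N} \<subseteq> L \<union> U" "\<not> {Suc t..N} \<subseteq> L" by blast+
  then show ?thesis unfolding crw_def by simp
qed

lemma crw_split_U:
  assumes "\<forall>x\<in>L. x < s" "\<forall>x\<in>U. s < x" "t \<in> U"
  shows "crw c N (L \<union> U) t = crw c N U t"
proof -
  have st: "s < t" using assms by blast
  have "x \<notin> L" if "x \<in> {Suc t..N}" for x
  proof
    assume "x \<in> L"
    then have "x < s" using assms(1) by blast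
    then show False using that st by simp
  qed
  then have "{Suc t..N} \<subseteq> L \<union> U \<longleftrightarrow> {Suc t..N} \<subseteq> U" by blast
  then show ?thesis unfolding crw_def by simp
qed

lemma W_split:
  fixes c :: "'a::comm_semiring_1"
  shows "finite L \<Longrightarrow> finite U \<Longrightarrow> \<forall>x\<in>L. x < s \<Longrightarrow> \<forall>x\<in>U. s < x \<Longrightarrow> s \<le> N \<Longrightarrow>
    W c q N (L \<union> U) = of_nat (card L + card U choose card L) * W c q N L * W c q N U"
proof (induction "card L + card U" arbitrary: L U)
  case 0
  then show ?case by simp
next
  case (Suc k L U)
  have disj: "L \<inter> U = {}" using Suc.prems by force
  have ne: "L \<union> U \<noteq> {}" using Suc.hyps(2) by auto
  have cLU: "card (L \<union> U) = card L + card U" using disj Suc.prems by (simp add: card_Un_disjoint)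
  have sL: "(\<Sum>t\<in>L. W c q N (L \<union> U - {t}) * Jw q (L \<union> U) t * crw c N (L \<union> U) t)
     = (if L = {} then 0 else of_nat (k choose (card L - 1)) * W c q N L * W c q N U)"
  proof (cases "L = {}")
    case False
    have "(\<Sum>t\<in>L. W c q N (L \<union> U - {t}) * Jw q (L \<union> U) t * crw c N (L \<union> U) t)
       = (\<Sum>t\<in>L. of_nat (k choose (card L - 1)) * W c q N U * (W c q N (L - {t}) * Jw q L t * crw c N L t))"
    proof (rule sum.cong[OF refl])
      fix t assume t: "t \<in> L"
      have e: "L \<union> U - {t} = (L - {t}) \<union> U" using t disj by auto
      have "card L > 0" using t Suc.prems(1) card_gt_0_iff by blast
      then have ck: "card (L - {t}) + card U = k" using t Suc.prems Suc.hyps(2) by (simp add: card_Diff_singleton)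
      have cL: "card (L - {t}) = card L - 1" using t Suc.prems by simp
      have IH: "W c q N ((L - {t}) \<union> U) = of_nat (k choose (card L - 1)) * W c q N (L - {t}) * W c q N U"
        using Suc.hyps(1)[of "L - {t}" U] ck cL Suc.prems by simp
      have JL: "Jw q (L \<union> U) t = Jw q L t" by (rule Jw_split_L[OF Suc.prems(3,4) t])
      have CL: "crw c N (L \<union> U) t = crw c N L t" by (rule crw_split_L[OF Suc.prems(3,4) t Suc.prems(5)])
      show "W c q N (L \<union> U - {t}) * Jw q (L \<union> U) t * crw c N (L \<union> U) t
         = of_nat (k choose (card L - 1)) * W c q N U * (W c q N (L - {t}) * Jw q L t * crw c N L t)"
        unfolding e IH JL CL by (simp only: ac_simps)
    qed
    also have "\<dots> = of_nat (k choose (card L - 1)) * W c q N U * W c q N L"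
      by (subst W_unfold[OF Suc.prems(1) False]) (simp add: sum_distrib_left)
    finally show ?thesis using False by (simp add: algebra_simps)
  qed simp
  have sU: "(\<Sum>t\<in>U. W c q N (L \<union> U - {t}) * Jw q (L \<union> U) t * crw c N (L \<union> U) t)
     = of_nat (k choose card L) * W c q N L * W c q N U"
  proof (cases "U = {}")
    case True
    then have "card L = Suc k" using Suc.hyps(2) by simp
    then have z: "(of_nat (k choose card L) :: 'a) = 0" by (simp add: binomial_eq_0)
    show ?thesis unfolding z True by simp
  next
    case False
    have "(\<Sum>t\<in>U. W c q N (L \<union> U - {t}) * Jw q (L \<union> U) t * crw c N (L \<union> U) t)
       = (\<Sum>t\<in>U. of_nat (k choose card L) * W c q N L * (W c q N (U - {t}) * Jw q U t * crw c N U t))"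
    proof (rule sum.cong[OF refl])
      fix t assume t: "t \<in> U"
      have e: "L \<union> U - {t} = L \<union> (U - {t})" using t disj by auto
      have "card U > 0" using t Suc.prems(2) card_gt_0_iff by blast
      then have ck: "card L + card (U - {t}) = k" using t Suc.prems Suc.hyps(2) by (simp add: card_Diff_singleton)
      have s2: "\<forall>x\<in>U - {t}. s < x" using Suc.prems by auto
      have IH: "W c q N (L \<union> (U - {t})) = of_nat (k choose card L) * W c q N L * W c q N (U - {t})"
        using Suc.hyps(1)[of L "U - {t}"] ck s2 Suc.prems by simp
      have JU: "Jw q (L \<union> U) t = Jw q U t" by (rule Jw_split_U[OF Suc.prems(3,4) t])
      have CU: "crw c N (L \<union> U) t = crw c N U t" by (rule crw_split_U[OF Suc.prems(3,4) t])
      show "W c q N (L \<union> U - {t}) * Jw q (L \<union> U) t * crw c N (L \<union> U) t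
         = of_nat (k choose card L) * W c q N L * (W c q N (U - {t}) * Jw q U t * crw c N U t)"
        unfolding e IH JU CU by (simp only: ac_simps)
    qed
    also have "\<dots> = of_nat (k choose card L) * W c q N L * W c q N U"
      by (subst W_unfold[OF Suc.prems(2) False]) (simp add: sum_distrib_left)
    finally show ?thesis .
  qed
  have "W c q N (L \<union> U) = (\<Sum>t\<in>L \<union> U. W c q N (L \<union> U - {t}) * Jw q (L \<union> U) t * crw c N (L \<union> U) t)"
    using ne Suc.prems by (intro W_unfold) auto
  also have "\<dots> = (\<Sum>t\<in>L. W c q N (L \<union> U - {t}) * Jw q (L \<union> U) t * crw c N (L \<union> U) t)
     + (\<Sum>t\<in>U. W c q N (L \<union> U - {t}) * Jw q (L \<union> U) t * crw c N (L \<union> U) t)"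
    using disj Suc.prems by (simp add: sum.union_disjoint)
  also have "\<dots> = of_nat (card L + card U choose card L) * W c q N L * W c q N U"
  proof (cases "L = {}")
    case True
    then show ?thesis unfolding sL sU using Suc.hyps(2) by simp
  next
    case False
    then obtain l where l: "card L = Suc l" using Suc.prems by (cases "card L") auto
    have "(card L + card U choose card L) = (k choose (card L - 1)) + (k choose card L)"
      using l Suc.hyps(2) by simp
    then show ?thesis unfolding sL sU using False by (simp add: algebra_simps)
  qed
  finally show ?case .
qed

lemma W_nocrit:
  fixes c :: "'a::comm_semiring_1"
  shows "finite A \<Longrightarrow> t \<notin> A \<Longrightarrow> t \<le> N \<Longrightarrow> \<forall>x\<in>A. x < t \<Longrightarrow> W c q N A = W 1 q M A"
proof (induction "card A" arbitrary: A)
  case 0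
  then show ?case by simp
next
  case (Suc k A)
  have ne: "A \<noteq> {}" using Suc.hyps(2) by auto
  have "W c q N A = (\<Sum>s\<in>A. W c q N (A - {s}) * Jw q A s * crw c N A s)"
    by (rule W_unfold[OF Suc.prems(1) ne])
  also have "\<dots> = (\<Sum>s\<in>A. W 1 q M (A - {s}) * Jw q A s * crw 1 M A s)"
  proof (rule sum.cong[OF refl])
    fix s assume s: "s \<in> A"
    have "t \<in> {Suc s..N}" using s Suc.prems by auto
    then have "\<not> {Suc s..N} \<subseteq> A" using Suc.prems(2) by blast
    then have cr: "crw c N A s = 1" "crw 1 M A s = (1::'a)" by (auto simp: crw_def)
    have "W c q N (A - {s}) = W 1 q M (A - {s})"
      using Suc.hyps(1)[of "A - {s}"] Suc.hyps(2) Suc.prems s by auto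
    then show "W c q N (A - {s}) * Jw q A s * crw c N A s = W 1 q M (A - {s}) * Jw q A s * crw 1 M A s"
      by (simp add: cr)
  qed
  also have "\<dots> = W 1 q M A"
    by (rule W_unfold[OF Suc.prems(1) ne, symmetric])
  finally show ?case .
qed

lemma W_shift:
  fixes c :: "'a::comm_semiring_1"
  shows "finite A \<Longrightarrow> \<forall>x\<in>A. k < x \<Longrightarrow> k \<le> N \<Longrightarrow> W c q N A = W c q (N - k) ((\<lambda>x. x - k) ` A)"
proof (induction "card A" arbitrary: A)
  case 0
  then show ?case by simp
next
  case (Suc m A)
  define f where "f = (\<lambda>x::nat. x - k)"
  have ne: "A \<noteq> {}" using Suc.hyps(2) by auto
  have inj: "inj_on f A"
  proof (rule inj_onI)
    fix x y assume "x \<in> A" "y \<in> A" "f x = f y"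
    moreover have "k < x" "k < y" using \<open>x \<in> A\<close> \<open>y \<in> A\<close> Suc.prems(2) by auto
    ultimately show "x = y" unfolding f_def by simp
  qed
  have mem: "y \<in> f ` A \<longleftrightarrow> y + k \<in> A" for y
  proof
    assume "y \<in> f ` A"
    then obtain a where "a \<in> A" "y = a - k" by (auto simp: f_def)
    moreover have "k < a" using \<open>a \<in> A\<close> Suc.prems(2) by auto
    ultimately show "y + k \<in> A" by simp
  next
    assume "y + k \<in> A"
    then show "y \<in> f ` A" unfolding f_def by (intro image_eqI[of _ _ "y + k"]) auto
  qed
  have fne: "f ` A \<noteq> {}" "finite (f ` A)" using ne Suc.prems by auto
  have "W c q (N - k) (f ` A) = (\<Sum>y\<in>f ` A. W c q (N - k) (f ` A - {y}) * Jw q (f ` A) y * crw c (N - k) (f ` A) y)"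
    by (rule W_unfold[OF fne(2) fne(1)])
  also have "\<dots> = (\<Sum>x\<in>A. W c q (N - k) (f ` A - {f x}) * Jw q (f ` A) (f x) * crw c (N - k) (f ` A) (f x))"
    by (rule sum.reindex[OF inj, unfolded comp_def])
  also have "\<dots> = (\<Sum>x\<in>A. W c q N (A - {x}) * Jw q A x * crw c N A x)"
  proof (rule sum.cong[OF refl])
    fix x assume x: "x \<in> A"
    have xk: "k < x" using x Suc.prems by auto
    have e: "f ` A - {f x} = f ` (A - {x})" using inj x by (simp add: inj_on_image_set_diff)
    have IH: "W c q N (A - {x}) = W c q (N - k) (f ` (A - {x}))"
      unfolding f_def using Suc.hyps(1)[of "A - {x}"] Suc.hyps(2) Suc.prems x by auto
    have J: "(j < f x \<and> {f x - j..<f x} \<subseteq> f ` A) \<longleftrightarrow> (j < x \<and> {x - j..<x} \<subseteq> A)" for j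
    proof
      assume h: "j < f x \<and> {f x - j..<f x} \<subseteq> f ` A"
      have "z \<in> A" if "z \<in> {x - j..<x}" for z
      proof -
        have "z - k \<in> {f x - j..<f x}" using that h xk unfolding f_def by auto
        then have "z - k \<in> f ` A" using h by blast
        then have "z - k + k \<in> A" using mem by blast
        moreover have "k \<le> z" using that h xk unfolding f_def by auto
        ultimately show ?thesis by simp
      qed
      then show "j < x \<and> {x - j..<x} \<subseteq> A" using h unfolding f_def by auto
    next
      assume h: "j < x \<and> {x - j..<x} \<subseteq> A"
      have jk: "j < x - k"
      proof (rule ccontr)
        assume "\<not> j < x - k"
        then have "k \<in> {x - j..<x}" using xk by auto
        then have "k \<in> A" using h by blast
        then show False using Suc.prems(2) by blast
      qed
      have "y \<in> f ` A" if "y \<in> {f x - j..<f x}" for y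
      proof -
        have "y + k \<in> {x - j..<x}" using that jk xk unfolding f_def by auto
        then show ?thesis using h mem by blast
      qed
      then show "j < f x \<and> {f x - j..<f x} \<subseteq> f ` A" using jk unfolding f_def by auto
    qed
    have JJ: "Jw q (f ` A) (f x) = Jw q A x" unfolding Jw_def using J by simp
    have C: "{Suc (f x)..N - k} \<subseteq> f ` A \<longleftrightarrow> {Suc x..N} \<subseteq> A"
    proof
      assume h: "{Suc (f x)..N - k} \<subseteq> f ` A"
      have "z \<in> A" if "z \<in> {Suc x..N}" for z
      proof -
        have "z - k \<in> {Suc (f x)..N - k}" using that xk unfolding f_def by auto
        then have "z - k + k \<in> A" using h mem by blast
        then show ?thesis using that xk by simp
      qed
      then show "{Suc x..N} \<subseteq> A" by blast
    next
      assume h: "{Suc x..N} \<subseteq> A"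
      have "y \<in> f ` A" if "y \<in> {Suc (f x)..N - k}" for y
      proof -
        have "y + k \<in> {Suc x..N}" using that xk Suc.prems(3) unfolding f_def by auto
        then show ?thesis using h mem by blast
      qed
      then show "{Suc (f x)..N - k} \<subseteq> f ` A" by blast
    qed
    have CC: "crw c (N - k) (f ` A) (f x) = crw c N A x" unfolding crw_def using C by simp
    show "W c q (N - k) (f ` A - {f x}) * Jw q (f ` A) (f x) * crw c (N - k) (f ` A) (f x)
        = W c q N (A - {x}) * Jw q A x * crw c N A x"
      by (simp only: e JJ CC IH)
  qed
  also have "\<dots> = W c q N A"
    by (rule W_unfold[OF Suc.prems(1) ne, symmetric])
  finally show ?case unfolding f_def by simp
qed

lemma PW_rec:
  fixes c :: "'a::comm_semiring_1"
  assumes n: "1 \<le> n"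
  shows "W c q n {1..n} = (\<Sum>s\<in>{1..n}. of_nat (n - 1 choose (s - 1)) * W 1 q (s - 1) {1..s - 1}
          * W c q (n - s) {1..n - s} * (\<Sum>j<s. q j) * c)"
proof -
  have "W c q n {1..n} = (\<Sum>s\<in>{1..n}. W c q n ({1..n} - {s}) * Jw q {1..n} s * crw c n {1..n} s)"
    using n by (intro W_unfold) auto
  also have "\<dots> = (\<Sum>s\<in>{1..n}. of_nat (n - 1 choose (s - 1)) * W 1 q (s - 1) {1..s - 1}
          * W c q (n - s) {1..n - s} * (\<Sum>j<s. q j) * c)"
  proof (rule sum.cong[OF refl])
    fix s assume s: "s \<in> {1..n}"
    have cr: "crw c n {1..n} s = c" unfolding crw_def by auto
    have "{j. j < s \<and> {s - j..<s} \<subseteq> {1..n}} = {..<s}" using s by auto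
    then have J: "Jw q {1..n} s = (\<Sum>j<s. q j)" unfolding Jw_def by simp
    have e: "{1..n} - {s} = {1..<s} \<union> {Suc s..n}" using s by auto
    have sp: "W c q n ({1..<s} \<union> {Suc s..n}) =
      of_nat (card {1..<s} + card {Suc s..n} choose card {1..<s}) * W c q n {1..<s} * W c q n {Suc s..n}"
      using s by (intro W_split) auto
    have cards: "card {1..<s} + card {Suc s..n} = n - 1" "card {1..<s} = s - 1" using s by auto
    have lo: "W c q n {1..<s} = W 1 q (s - 1) {1..s - 1}"
    proof -
      have "W c q n {1..<s} = W 1 q (s - 1) {1..<s}"
        using s by (intro W_nocrit[of _ s]) auto
      moreover have "{1..<s} = {1..s - 1}" using s by auto
      ultimately show ?thesis by simp
    qed
    have hi: "W c q n {Suc s..n} = W c q (n - s) {1..n - s}"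
    proof -
      have "W c q n {Suc s..n} = W c q (n - s) ((\<lambda>x. x - s) ` {Suc s..n})"
        using s by (intro W_shift) auto
      moreover have "(\<lambda>x. x - s) ` {Suc s..n} = {1..n - s}"
      proof
        show "(\<lambda>x. x - s) ` {Suc s..n} \<subseteq> {1..n - s}" by auto
        show "{1..n - s} \<subseteq> (\<lambda>x. x - s) ` {Suc s..n}"
        proof
          fix y assume "y \<in> {1..n - s}"
          then show "y \<in> (\<lambda>x. x - s) ` {Suc s..n}" by (intro image_eqI[of _ _ "y + s"]) auto
        qed
      qed
      ultimately show ?thesis by simp
    qed
    show "W c q n ({1..n} - {s}) * Jw q {1..n} s * crw c n {1..n} s =
      of_nat (n - 1 choose (s - 1)) * W 1 q (s - 1) {1..s - 1} * W c q (n - s) {1..n - s} * (\<Sum>j<s. q j) * c"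
      unfolding e sp lo hi J cr using cards by simp
  qed
  finally show ?thesis .
qed

section \<open>Forest side\<close>

definition forestsOn :: "nat set \<Rightarrow> (nat \<Rightarrow> nat) set" where
  "forestsOn V = {par. (\<forall>v. v \<notin> V \<longrightarrow> par v = 0) \<and>
      (\<forall>v\<in>V. par v \<in> insert 0 V \<and> (\<exists>k. (par ^^ k) v = 0))}"

definition invV :: "nat set \<Rightarrow> (nat \<Rightarrow> nat) \<Rightarrow> nat \<Rightarrow> nat" where
  "invV V par v = card {x\<in>V. descendant par x v \<and> x < v}"

definition FW :: "'a::comm_semiring_1 \<Rightarrow> (nat \<Rightarrow> 'a) \<Rightarrow> nat set \<Rightarrow> 'a" where
  "FW c q V = (\<Sum>par\<in>forestsOn V. (\<Prod>v\<in>V. q (invV V par v)) * c ^ card {v\<in>V. par v = 0})"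

lemma funpow_Suc_app: "(f ^^ Suc k) v = f ((f ^^ k) v)"
  by simp

lemma zero_stay:
  fixes p :: "nat \<Rightarrow> nat"
  shows "p 0 = 0 \<Longrightarrow> (p ^^ k) 0 = 0"
  by (induction k) auto

lemma zero_after:
  fixes p :: "nat \<Rightarrow> nat"
  assumes "p 0 = 0" "(p ^^ k) v = 0" "k \<le> j"
  shows "(p ^^ j) v = 0"
proof -
  have "(p ^^ j) v = (p ^^ (j - k)) ((p ^^ k) v)"
    using assms(3) by (metis funpow_add le_add_diff_inverse2 o_apply)
  then show ?thesis using assms zero_stay by simp
qed

lemma stay_in:
  assumes "\<forall>v\<in>S. p v \<in> S" "v \<in> S"
  shows "(p ^^ k) v \<in> S"
  using assms by (induction k) auto

lemma agree_iter:
  assumes "\<forall>v\<in>S. p v = p' v" "\<forall>v\<in>S. p v \<in> S" "v \<in> S"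
  shows "(p' ^^ k) v = (p ^^ k) v"
proof (induction k)
  case 0 then show ?case by simp
next
  case (Suc k)
  have "(p ^^ k) v \<in> S" using stay_in assms by metis
  then show ?case using Suc assms(1) by simp
qed

lemma forestsOn_D:
  assumes "par \<in> forestsOn V" "0 \<notin> V"
  shows "par 0 = 0" "\<And>v. v \<notin> V \<Longrightarrow> par v = 0" "\<And>v. v \<in> V \<Longrightarrow> par v \<in> insert 0 V"
    "\<And>v. v \<in> V \<Longrightarrow> \<exists>k. (par ^^ k) v = 0" "\<forall>v\<in>insert 0 V. par v \<in> insert 0 V"
  using assms unfolding forestsOn_def by auto

lemma finite_forestsOn: "finite V \<Longrightarrow> finite (forestsOn V)"
proof -
  assume "finite V"
  then have "finite {f. \<forall>x. (x \<in> V \<longrightarrow> f x \<in> insert 0 V) \<and> (x \<notin> V \<longrightarrow> f x = (0::nat))}"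
    by (intro finite_set_of_finite_funs) auto
  then show ?thesis by (rule finite_subset[rotated]) (auto simp: forestsOn_def)
qed

definition glue :: "nat set \<Rightarrow> nat set \<Rightarrow> nat \<Rightarrow> (nat \<Rightarrow> nat) \<Rightarrow> (nat \<Rightarrow> nat) \<Rightarrow> nat \<Rightarrow> nat" where
  "glue V K r F1 F2 = (\<lambda>v. if v \<in> V - K then F2 v else if v \<in> K - {r} then (if F1 v = 0 then r else F1 v) else 0)"

context
  fixes V K :: "nat set" and r :: nat and F1 F2 :: "nat \<Rightarrow> nat"
  assumes KV: "K \<subseteq> V" and rK: "r \<in> K" and F1: "F1 \<in> forestsOn (K - {r})"
    and F2: "F2 \<in> forestsOn (V - K)" and V0: "0 \<notin> V"
begin

abbreviation "G \<equiv> glue V K r F1 F2"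

lemma r0: "r \<noteq> 0" using rK KV V0 by (metis in_mono)

lemma G_r: "G r = 0" using rK by (simp add: glue_def)
lemma G_0: "G 0 = 0"
proof -
  have "0 \<notin> V - K" "0 \<notin> K - {r}" using V0 KV by blast+
  then show ?thesis unfolding glue_def by (simp only: if_False)
qed
lemma G_out: "v \<notin> V \<Longrightarrow> G v = 0"
proof -
  assume "v \<notin> V"
  then have "v \<notin> V - K" "v \<notin> K - {r}" using KV by blast+
  then show ?thesis unfolding glue_def by (simp only: if_False)
qed
lemma G_VK: "v \<in> V - K \<Longrightarrow> G v = F2 v" by (simp add: glue_def)
lemma G_K: "v \<in> K - {r} \<Longrightarrow> G v = (if F1 v = 0 then r else F1 v)" by (simp add: glue_def)

lemma F1_0: "F1 0 = 0" using forestsOn_D(1)[OF F1] V0 KV by auto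
lemma F1_out: "v \<notin> K - {r} \<Longrightarrow> F1 v = 0" using F1 by (simp add: forestsOn_def)
lemma F1_in: "v \<in> K - {r} \<Longrightarrow> F1 v \<in> insert 0 (K - {r})" using F1 by (simp add: forestsOn_def)
lemma F2_in: "v \<in> V - K \<Longrightarrow> F2 v \<in> insert 0 (V - K)" using F2 by (simp add: forestsOn_def)
lemma F2_0: "F2 0 = 0" using F2 V0 by (simp add: forestsOn_def)

lemma G_maps_VK: "\<forall>v\<in>insert 0 (V - K). G v \<in> insert 0 (V - K)"
proof
  fix v assume "v \<in> insert 0 (V - K)"
  then consider "v = 0" | "v \<in> V - K" by blast
  then show "G v \<in> insert 0 (V - K)"
  proof cases
    case 1 then show ?thesis using G_0 by simp
  next
    case 2 then show ?thesis using G_VK[OF 2] F2_in[OF 2] by simp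
  qed
qed

lemma G_maps_K: "\<forall>v\<in>insert 0 K. G v \<in> insert 0 K"
proof
  fix v assume v: "v \<in> insert 0 K"
  show "G v \<in> insert 0 K"
  proof (cases "v \<in> K - {r}")
    case True
    have "G v = (if F1 v = 0 then r else F1 v)" "F1 v \<in> insert 0 (K - {r})"
      using G_K[OF True] F1_in[OF True] by auto
    then show ?thesis using rK by (cases "F1 v = 0") auto
  next
    case False
    then have "v = 0 \<or> v = r" using v by auto
    then show ?thesis using G_0 G_r by auto
  qed
qed

lemma G_iter_VK: "v \<in> insert 0 (V - K) \<Longrightarrow> (G ^^ k) v = (F2 ^^ k) v"
proof -
  assume v: "v \<in> insert 0 (V - K)"
  have "\<forall>v\<in>insert 0 (V - K). F2 v = G v" using G_0 F2_0 G_VK by auto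
  moreover have "\<forall>v\<in>insert 0 (V - K). F2 v \<in> insert 0 (V - K)" using F2_0 F2_in by auto
  ultimately show ?thesis using agree_iter[of "insert 0 (V - K)" F2 G v k] v by blast
qed

lemma G_iter_VK_in: "v \<in> insert 0 (V - K) \<Longrightarrow> (G ^^ k) v \<in> insert 0 (V - K)"
  by (rule stay_in[OF G_maps_VK])

lemma G_iter_K_in: "v \<in> insert 0 K \<Longrightarrow> (G ^^ k) v \<in> insert 0 K"
  by (rule stay_in[OF G_maps_K])

definition kx :: "nat \<Rightarrow> nat" where "kx x = (LEAST k. (F1 ^^ k) x = 0)"

lemma kx_props:
  assumes x: "x \<in> K - {r}"
  shows "(F1 ^^ kx x) x = 0" "0 < kx x" "\<And>j. j < kx x \<Longrightarrow> (F1 ^^ j) x \<noteq> 0"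
proof -
  have "\<exists>k. (F1 ^^ k) x = 0" using F1 x by (simp add: forestsOn_def)
  then show "(F1 ^^ kx x) x = 0" unfolding kx_def by (rule LeastI_ex)
  show "\<And>j. j < kx x \<Longrightarrow> (F1 ^^ j) x \<noteq> 0" unfolding kx_def by (rule not_less_Least)
  have "x \<noteq> 0" using x KV V0 by (metis DiffD1 in_mono)
  then show "0 < kx x" using \<open>(F1 ^^ kx x) x = 0\<close> by (cases "kx x") auto
qed

lemma F1_iter_in: "x \<in> K - {r} \<Longrightarrow> (F1 ^^ j) x \<in> insert 0 (K - {r})"
  by (rule stay_in) (use F1_in F1_0 in auto)

lemma orbit:
  assumes x: "x \<in> K - {r}"
  shows "(G ^^ j) x = (if j < kx x then (F1 ^^ j) x else if j = kx x then r else 0)"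
proof (induction j)
  case 0
  then show ?case using kx_props[OF x] by simp
next
  case (Suc j)
  show ?case
  proof (cases "Suc j \<le> kx x")
    case True
    then have jl: "j < kx x" by simp
    have u: "(F1 ^^ j) x \<in> K - {r}" using F1_iter_in[OF x, of j] kx_props(3)[OF x jl] by auto
    have "(G ^^ Suc j) x = G ((F1 ^^ j) x)" using Suc jl by simp
    also have "\<dots> = (if F1 ((F1 ^^ j) x) = 0 then r else F1 ((F1 ^^ j) x))" using G_K[OF u] .
    also have "\<dots> = (if Suc j < kx x then (F1 ^^ Suc j) x else if Suc j = kx x then r else 0)"
    proof (cases "Suc j < kx x")
      case True
      then show ?thesis using kx_props(3)[OF x True] by simp
    next
      case False
      then have "Suc j = kx x" using \<open>Suc j \<le> kx x\<close> by simp
      then have "(F1 ^^ Suc j) x = 0" using kx_props(1)[OF x] by simp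
      then have "F1 ((F1 ^^ j) x) = 0" by simp
      then show ?thesis using \<open>Suc j = kx x\<close> by simp
    qed
    finally show ?thesis .
  next
    case False
    then have "(G ^^ j) x = r \<or> (G ^^ j) x = 0" using Suc by auto
    then have "(G ^^ Suc j) x = 0" using G_r G_0 by auto
    then show ?thesis using False by simp
  qed
qed

lemma reach_r: "x \<in> K \<Longrightarrow> \<exists>k. (G ^^ k) x = r"
proof -
  assume x: "x \<in> K"
  show ?thesis
  proof (cases "x = r")
    case True then show ?thesis by (intro exI[of _ 0]) simp
  next
    case False
    then have "(G ^^ kx x) x = r" using orbit[of x "kx x"] x by simp
    then show ?thesis by blast
  qed
qed

lemma G_forest: "G \<in> forestsOn V"
proof -
  have "\<exists>k. (G ^^ k) v = 0" if v: "v \<in> V" for v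
  proof (cases "v \<in> K")
    case True
    then obtain k where "(G ^^ k) v = r" using reach_r by blast
    then have "(G ^^ Suc k) v = 0" using G_r by simp
    then show ?thesis by blast
  next
    case False
    then have vv: "v \<in> V - K" using v by simp
    obtain k where "(F2 ^^ k) v = 0" using F2 vv by (auto simp: forestsOn_def)
    moreover have "(G ^^ k) v = (F2 ^^ k) v" by (rule G_iter_VK) (use vv in blast)
    ultimately show ?thesis by auto
  qed
  moreover have "G v \<in> insert 0 V" if "v \<in> V" for v
    using G_maps_K G_maps_VK KV that by (cases "v \<in> K") auto
  ultimately show ?thesis using G_out unfolding forestsOn_def by auto
qed


lemma v_nonzero: "v \<in> V \<Longrightarrow> v \<noteq> 0"
  using V0 by (metis)

lemma desc_VK:
  assumes v: "v \<in> V - K"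
  shows "{x\<in>V. descendant G x v \<and> x < v} = {x\<in>V - K. descendant F2 x v \<and> x < v}"
proof (intro set_eqI iffI)
  fix x assume "x \<in> {x\<in>V. descendant G x v \<and> x < v}"
  then have x: "x \<in> V" "descendant G x v" "x < v" by auto
  then obtain k where k: "k \<ge> 1" "(G ^^ k) x = v" "x \<noteq> v" "v \<noteq> 0" unfolding descendant_def by auto
  have xK: "x \<notin> K"
  proof
    assume "x \<in> K"
    then have "(G ^^ k) x \<in> insert 0 K" by (intro G_iter_K_in) blast
    then show False using k v by auto
  qed
  then have xx: "x \<in> V - K" using x by blast
  then have "(F2 ^^ k) x = v" using G_iter_VK[of x k] k by auto
  then show "x \<in> {x\<in>V - K. descendant F2 x v \<and> x < v}"
    using xx k x(3) unfolding descendant_def by auto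
next
  fix x assume "x \<in> {x\<in>V - K. descendant F2 x v \<and> x < v}"
  then have x: "x \<in> V - K" "descendant F2 x v" "x < v" by auto
  then obtain k where k: "k \<ge> 1" "(F2 ^^ k) x = v" "x \<noteq> v" "v \<noteq> 0" unfolding descendant_def by auto
  then have "(G ^^ k) x = v" using G_iter_VK[of x k] x by auto
  then show "x \<in> {x\<in>V. descendant G x v \<and> x < v}"
    using x k unfolding descendant_def by auto
qed

lemma G_iter_r: "k \<ge> 1 \<Longrightarrow> (G ^^ k) r = 0"
proof -
  assume k: "k \<ge> 1"
  have "(G ^^ 1) r = 0" using G_r by simp
  then show ?thesis using zero_after[of G 1 r k, OF G_0 _ k] by blast
qed

lemma iter_eq_K:
  assumes x: "x \<in> K - {r}" and v: "v \<in> K - {r}"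
  shows "(G ^^ j) x = v \<longleftrightarrow> (F1 ^^ j) x = v"
proof -
  have v0: "v \<noteq> 0" using v KV V0 by (metis DiffD1 in_mono)
  consider "j < kx x" | "j = kx x" | "kx x < j" by linarith
  then show ?thesis
  proof cases
    case 1 then show ?thesis using orbit[OF x, of j] by simp
  next
    case 2 then show ?thesis using orbit[OF x, of j] kx_props(1)[OF x] v v0 by auto
  next
    case 3
    have "(F1 ^^ j) x = 0" using zero_after[OF F1_0 kx_props(1)[OF x]] 3 by simp
    then show ?thesis using orbit[OF x, of j] 3 v0 by auto
  qed
qed

lemma desc_K:
  assumes v: "v \<in> K - {r}"
  shows "{x\<in>V. descendant G x v \<and> x < v} = {x\<in>K - {r}. descendant F1 x v \<and> x < v}"
proof (intro set_eqI iffI)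
  fix x assume "x \<in> {x\<in>V. descendant G x v \<and> x < v}"
  then have x: "x \<in> V" "descendant G x v" "x < v" by auto
  then obtain k where k: "k \<ge> 1" "(G ^^ k) x = v" "x \<noteq> v" "v \<noteq> 0" unfolding descendant_def by auto
  have xK: "x \<in> K"
  proof (rule ccontr)
    assume "x \<notin> K"
    then have "(G ^^ k) x \<in> insert 0 (V - K)" using x by (intro G_iter_VK_in) blast
    then show False using k v by auto
  qed
  have xr: "x \<noteq> r"
  proof
    assume "x = r"
    then show False using G_iter_r[OF k(1)] k by simp
  qed
  then have xx: "x \<in> K - {r}" using xK by blast
  then have "(F1 ^^ k) x = v" using iter_eq_K[OF xx v] k by simp
  then show "x \<in> {x\<in>K - {r}. descendant F1 x v \<and> x < v}"
    using xx k x(3) unfolding descendant_def by auto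
next
  fix x assume "x \<in> {x\<in>K - {r}. descendant F1 x v \<and> x < v}"
  then have x: "x \<in> K - {r}" "descendant F1 x v" "x < v" by auto
  then obtain k where k: "k \<ge> 1" "(F1 ^^ k) x = v" "x \<noteq> v" "v \<noteq> 0" unfolding descendant_def by auto
  then have "(G ^^ k) x = v" using iter_eq_K[OF x(1) v] by simp
  moreover have "x \<in> V" using x KV by blast
  ultimately show "x \<in> {x\<in>V. descendant G x v \<and> x < v}"
    using x k unfolding descendant_def by auto
qed

lemma desc_r: "{x\<in>V. descendant G x r \<and> x < r} = {x\<in>K. x < r}"
proof (intro set_eqI iffI)
  fix x assume "x \<in> {x\<in>V. descendant G x r \<and> x < r}"
  then have x: "x \<in> V" "descendant G x r" "x < r" by auto
  then obtain k where k: "k \<ge> 1" "(G ^^ k) x = r" unfolding descendant_def by auto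
  have xK: "x \<in> K"
  proof (rule ccontr)
    assume "x \<notin> K"
    then have "(G ^^ k) x \<in> insert 0 (V - K)" using x by (intro G_iter_VK_in) blast
    then show False using k rK r0 by auto
  qed
  then show "x \<in> {x\<in>K. x < r}" using x by simp
next
  fix x assume "x \<in> {x\<in>K. x < r}"
  then have x: "x \<in> K" "x < r" by auto
  then have xx: "x \<in> K - {r}" by simp
  have "(G ^^ kx x) x = r" using orbit[OF xx, of "kx x"] by simp
  moreover have "kx x \<ge> 1" using kx_props(2)[OF xx] by simp
  moreover have "x \<in> V" using x KV by blast
  ultimately show "x \<in> {x\<in>V. descendant G x r \<and> x < r}"
    using x r0 unfolding descendant_def by auto
qed

lemma roots_G: "{v\<in>V. G v = 0} = insert r {v\<in>V - K. F2 v = 0}"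
proof (intro set_eqI iffI)
  fix v assume "v \<in> {v\<in>V. G v = 0}"
  then have v: "v \<in> V" "G v = 0" by auto
  show "v \<in> insert r {v\<in>V - K. F2 v = 0}"
  proof (cases "v \<in> K - {r}")
    case True
    then have "G v \<noteq> 0" using G_K[OF True] r0 by auto
    then show ?thesis using v by simp
  next
    case False
    then show ?thesis using v G_VK by auto
  qed
next
  fix v assume "v \<in> insert r {v\<in>V - K. F2 v = 0}"
  then show "v \<in> {v\<in>V. G v = 0}" using G_r G_VK rK KV by auto
qed

lemma r_notin_roots: "r \<notin> {v\<in>V - K. F2 v = 0}"
  using rK by auto


lemma weight_G:
  fixes c :: "'a::comm_semiring_1" and q :: "nat \<Rightarrow> 'a"
  assumes fin: "finite V"
  shows "(\<Prod>v\<in>V. q (invV V G v)) * c ^ card {v\<in>V. G v = 0}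
    = c * q (card {x\<in>K. x < r}) * (\<Prod>v\<in>K - {r}. q (invV (K - {r}) F1 v))
      * ((\<Prod>v\<in>V - K. q (invV (V - K) F2 v)) * c ^ card {v\<in>V - K. F2 v = 0})"
proof -
  have finK: "finite K" using fin KV finite_subset by blast
  have Vs: "V = (V - K) \<union> insert r (K - {r})" using KV rK by blast
  have "(\<Prod>v\<in>V. q (invV V G v)) = (\<Prod>v\<in>V - K. q (invV V G v)) * (\<Prod>v\<in>insert r (K - {r}). q (invV V G v))"
  proof -
    have "(\<Prod>v\<in>V. q (invV V G v)) = (\<Prod>v\<in>(V - K) \<union> insert r (K - {r}). q (invV V G v))"
      by (simp only: Vs[symmetric])
    also have "\<dots> = (\<Prod>v\<in>V - K. q (invV V G v)) * (\<Prod>v\<in>insert r (K - {r}). q (invV V G v))"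
      by (rule prod.union_disjoint) (use fin finK rK in auto)
    finally show ?thesis .
  qed
  also have "(\<Prod>v\<in>insert r (K - {r}). q (invV V G v)) = q (invV V G r) * (\<Prod>v\<in>K - {r}. q (invV V G v))"
    using finK by (subst prod.insert) auto
  also have "(\<Prod>v\<in>V - K. q (invV V G v)) = (\<Prod>v\<in>V - K. q (invV (V - K) F2 v))"
    by (rule prod.cong[OF refl]) (simp add: invV_def desc_VK)
  also have "(\<Prod>v\<in>K - {r}. q (invV V G v)) = (\<Prod>v\<in>K - {r}. q (invV (K - {r}) F1 v))"
    by (rule prod.cong[OF refl]) (simp add: invV_def desc_K)
  also have "invV V G r = card {x\<in>K. x < r}" by (simp add: invV_def desc_r)
  finally have P: "(\<Prod>v\<in>V. q (invV V G v)) = (\<Prod>v\<in>V - K. q (invV (V - K) F2 v)) *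
      (q (card {x\<in>K. x < r}) * (\<Prod>v\<in>K - {r}. q (invV (K - {r}) F1 v)))" .
  have "card {v\<in>V. G v = 0} = Suc (card {v\<in>V - K. F2 v = 0})"
    unfolding roots_G using fin r_notin_roots by (simp add: card_insert_if)
  then have C: "c ^ card {v\<in>V. G v = 0} = c * c ^ card {v\<in>V - K. F2 v = 0}" by simp
  show ?thesis unfolding P C by (simp add: ac_simps)
qed

end


lemma root_unique:
  fixes p :: "nat \<Rightarrow> nat"
  assumes p0: "p 0 = 0" and i: "(p ^^ i) m = r1" and j: "(p ^^ j) m = r2"
    and r1: "r1 \<noteq> 0" "p r1 = 0" and r2: "r2 \<noteq> 0" "p r2 = 0"
  shows "r1 = r2"
proof -
  have gen: "(p ^^ b) m \<noteq> 0 \<Longrightarrow> a < b \<Longrightarrow> p ((p ^^ a) m) \<noteq> 0" for a b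
  proof -
    assume nz: "(p ^^ b) m \<noteq> 0" and ab: "a < b"
    have "(p ^^ b) m = (p ^^ (b - Suc a)) ((p ^^ Suc a) m)"
      using ab by (metis Suc_leI funpow_add le_add_diff_inverse2 o_apply)
    show ?thesis
    proof
      assume "p ((p ^^ a) m) = 0"
      then have "(p ^^ b) m = 0" using \<open>(p ^^ b) m = _\<close> zero_stay[of p, OF p0] by simp
      then show False using nz by simp
    qed
  qed
  consider "i < j" | "i = j" | "j < i" by linarith
  then show ?thesis
  proof cases
    case 1 then show ?thesis using gen[of j i] i j r1 r2 by simp
  next
    case 2 then show ?thesis using i j by simp
  next
    case 3 then show ?thesis using gen[of i j] i j r1 r2 by simp
  qed
qed

definition rootof :: "(nat \<Rightarrow> nat) \<Rightarrow> nat \<Rightarrow> nat" where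
  "rootof par m = (THE r. r \<noteq> 0 \<and> par r = 0 \<and> (\<exists>k. (par ^^ k) m = r))"

lemma rootof_eq:
  fixes p :: "nat \<Rightarrow> nat"
  assumes p0: "p 0 = 0" and r: "r \<noteq> 0" "p r = 0" "(p ^^ k) m = r"
  shows "rootof p m = r"
  unfolding rootof_def
proof (rule the_equality)
  show "r \<noteq> 0 \<and> p r = 0 \<and> (\<exists>k. (p ^^ k) m = r)" using r by blast
next
  fix r' assume "r' \<noteq> 0 \<and> p r' = 0 \<and> (\<exists>k. (p ^^ k) m = r')"
  then obtain k' where "r' \<noteq> 0" "p r' = 0" "(p ^^ k') m = r'" by blast
  then show "r' = r" using root_unique[OF p0 _ r(3)] r by blast
qed

lemma root_exists:
  fixes p :: "nat \<Rightarrow> nat"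
  assumes p0: "p 0 = 0" and m: "m \<noteq> 0" and k: "(p ^^ k) m = 0"
  shows "\<exists>r k. r \<noteq> 0 \<and> p r = 0 \<and> (p ^^ k) m = r"
proof -
  define k0 where "k0 = (LEAST k. (p ^^ k) m = 0)"
  have k0: "(p ^^ k0) m = 0" unfolding k0_def using k by (rule LeastI)
  have lt: "(p ^^ j) m \<noteq> 0" if "j < k0" for j using that unfolding k0_def by (rule not_less_Least)
  have "k0 \<noteq> 0" using k0 m by (cases k0) auto
  then obtain k1 where k1: "k0 = Suc k1" by (cases k0) auto
  have "(p ^^ k1) m \<noteq> 0" using lt k1 by simp
  moreover have "p ((p ^^ k1) m) = 0" using k0 k1 by simp
  ultimately show ?thesis by blast
qed

context
  fixes V :: "nat set" and K r F1 F2 m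
  assumes KV: "K \<subseteq> V" and rK: "r \<in> K" and F1: "F1 \<in> forestsOn (K - {r})"
    and F2: "F2 \<in> forestsOn (V - K)" and V0: "0 \<notin> V" and mK: "m \<in> K"
begin

lemma rootof_G: "rootof (glue V K r F1 F2) m = r"
proof -
  obtain k where "(glue V K r F1 F2 ^^ k) m = r" using reach_r[OF KV rK F1 F2 V0 mK] by blast
  then show ?thesis
    by (intro rootof_eq[OF G_0[OF KV rK F1 F2 V0] r0[OF KV rK F1 F2 V0] G_r[OF KV rK F1 F2 V0]])
qed

lemma Kof_G: "{v\<in>V. \<exists>k. (glue V K r F1 F2 ^^ k) v = r} = K"
proof (intro set_eqI iffI)
  fix v assume "v \<in> {v\<in>V. \<exists>k. (glue V K r F1 F2 ^^ k) v = r}"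
  then obtain k where v: "v \<in> V" "(glue V K r F1 F2 ^^ k) v = r" by blast
  show "v \<in> K"
  proof (rule ccontr)
    assume "v \<notin> K"
    then have "(glue V K r F1 F2 ^^ k) v \<in> insert 0 (V - K)"
      using v by (intro G_iter_VK_in[OF KV rK F1 F2 V0]) blast
    then show False using v rK r0[OF KV rK F1 F2 V0] by auto
  qed
next
  fix v assume "v \<in> K"
  then show "v \<in> {v\<in>V. \<exists>k. (glue V K r F1 F2 ^^ k) v = r}"
    using reach_r[OF KV rK F1 F2 V0] KV by blast
qed

end


definition Kof :: "nat set \<Rightarrow> (nat \<Rightarrow> nat) \<Rightarrow> nat \<Rightarrow> nat set" where
  "Kof V par m = {v\<in>V. \<exists>k. (par ^^ k) v = rootof par m}"

definition F1of :: "nat set \<Rightarrow> (nat \<Rightarrow> nat) \<Rightarrow> nat \<Rightarrow> nat \<Rightarrow> nat" where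
  "F1of V par m = (\<lambda>v. if v \<in> Kof V par m - {rootof par m} then (if par v = rootof par m then 0 else par v) else 0)"

definition F2of :: "nat set \<Rightarrow> (nat \<Rightarrow> nat) \<Rightarrow> nat \<Rightarrow> nat \<Rightarrow> nat" where
  "F2of V par m = (\<lambda>v. if v \<in> V - Kof V par m then par v else 0)"

context
  fixes V :: "nat set" and par :: "nat \<Rightarrow> nat" and m :: nat
  assumes P: "par \<in> forestsOn V" and V0: "0 \<notin> V" and mV: "m \<in> V"
begin

lemma par0: "par 0 = 0" using forestsOn_D(1)[OF P V0] .

lemma par_iter_in: "v \<in> insert 0 V \<Longrightarrow> (par ^^ k) v \<in> insert 0 V"
  by (rule stay_in[OF forestsOn_D(5)[OF P V0]])

lemma rt_props: "rootof par m \<noteq> 0" "par (rootof par m) = 0" "\<exists>k. (par ^^ k) m = rootof par m"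
  "rootof par m \<in> V"
proof -
  have m0: "m \<noteq> 0" using mV V0 by (metis)
  obtain k where "(par ^^ k) m = 0" using forestsOn_D(4)[OF P V0 mV] by blast
  then obtain r k where r: "r \<noteq> 0" "par r = 0" "(par ^^ k) m = r"
    using root_exists[of par m, OF par0 m0] by blast
  then have e: "rootof par m = r" using rootof_eq[of par r k m, OF par0] by blast
  show "rootof par m \<noteq> 0" "par (rootof par m) = 0" "\<exists>k. (par ^^ k) m = rootof par m"
    using r e by auto
  have "(par ^^ k) m \<in> insert 0 V" using mV by (intro par_iter_in) blast
  then show "rootof par m \<in> V" using r e by auto
qed

lemma Kp_props: "Kof V par m \<subseteq> V" "m \<in> Kof V par m" "rootof par m \<in> Kof V par m"
  using rt_props mV unfolding Kof_def by (auto intro: exI[of _ 0])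

lemma p2:
  assumes v: "v \<in> Kof V par m - {rootof par m}"
  shows "par v \<in> Kof V par m" "par v \<noteq> 0"
proof -
  obtain k where k: "(par ^^ k) v = rootof par m" and vV: "v \<in> V" using v unfolding Kof_def by blast
  have "k \<noteq> 0"
  proof
    assume "k = 0"
    then have "v = rootof par m" using k by simp
    then show False using v by blast
  qed
  then obtain k' where k': "k = Suc k'" by (cases k) auto
  have e: "(par ^^ k') (par v) = rootof par m" using k k' by (simp add: funpow_swap1)
  show pv0: "par v \<noteq> 0"
  proof
    assume "par v = 0"
    then have "(par ^^ k') (par v) = 0" using zero_stay[of par, OF par0] by simp
    then show False using e rt_props(1) by simp
  qed
  have "par v \<in> insert 0 V" using forestsOn_D(3)[OF P V0 vV] .
  then have "par v \<in> V" using pv0 by blast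
  then show "par v \<in> Kof V par m" using e unfolding Kof_def by blast
qed

lemma p3:
  assumes v: "v \<in> V - Kof V par m"
  shows "par v \<in> insert 0 (V - Kof V par m)"
proof -
  have pv: "par v \<in> insert 0 V" using forestsOn_D(3)[OF P V0] v by blast
  have "par v \<notin> Kof V par m"
  proof
    assume "par v \<in> Kof V par m"
    then obtain k where "(par ^^ k) (par v) = rootof par m" unfolding Kof_def by blast
    then have "(par ^^ Suc k) v = rootof par m" by (simp add: funpow_swap1)
    then have "v \<in> Kof V par m" using v unfolding Kof_def by blast
    then show False using v by blast
  qed
  then show ?thesis using pv by blast
qed

lemma F2of_forest: "F2of V par m \<in> forestsOn (V - Kof V par m)"
proof -
  let ?S = "insert 0 (V - Kof V par m)"
  let ?F = "F2of V par m"
  have F0: "?F 0 = 0" using V0 unfolding F2of_def by auto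
  have maps: "\<forall>v\<in>?S. ?F v \<in> ?S"
  proof
    fix v assume "v \<in> ?S"
    then consider "v = 0" | "v \<in> V - Kof V par m" by blast
    then show "?F v \<in> ?S"
    proof cases
      case 1 then show ?thesis using F0 by simp
    next
      case 2 then show ?thesis using p3[OF 2] unfolding F2of_def by simp
    qed
  qed
  have agr: "\<forall>v\<in>?S. ?F v = par v" using F0 par0 unfolding F2of_def by auto
  have "\<exists>k. (?F ^^ k) v = 0" if v: "v \<in> V - Kof V par m" for v
  proof -
    obtain k where k: "(par ^^ k) v = 0" using forestsOn_D(4)[OF P V0] v by blast
    have "(par ^^ k) v = (?F ^^ k) v" using agree_iter[OF agr maps, of v k] v by blast
    then show ?thesis using k by metis
  qed
  moreover have "?F v \<in> insert 0 (V - Kof V par m)" if "v \<in> V - Kof V par m" for v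
    using maps that by blast
  moreover have "?F v = 0" if "v \<notin> V - Kof V par m" for v
    using that unfolding F2of_def by (simp only: if_False)
  ultimately show ?thesis unfolding forestsOn_def by blast
qed

lemma F1of_forest: "F1of V par m \<in> forestsOn (Kof V par m - {rootof par m})"
proof -
  let ?K = "Kof V par m" and ?r = "rootof par m" and ?F = "F1of V par m"
  have out: "?F v = 0" if "v \<notin> ?K - {?r}" for v using that unfolding F1of_def by (simp only: if_False)
  have inn: "?F v \<in> insert 0 (?K - {?r})" if v: "v \<in> ?K - {?r}" for v
    using p2[OF v] v unfolding F1of_def by auto
  have acyc: "\<exists>k. (?F ^^ k) v = 0" if v: "v \<in> ?K - {?r}" for v
  proof -
    define kv where "kv = (LEAST k. (par ^^ k) v = ?r)"
    have ex: "\<exists>k. (par ^^ k) v = ?r" using v unfolding Kof_def by blast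
    have kv: "(par ^^ kv) v = ?r" unfolding kv_def using ex by (rule LeastI_ex)
    have lt: "(par ^^ j) v \<noteq> ?r" if "j < kv" for j
      using that unfolding kv_def by (rule not_less_Least)
    have inK: "(par ^^ j) v \<in> ?K - {?r}" if "j < kv" for j
      using that
    proof (induction j)
      case 0 then show ?case using v by simp
    next
      case (Suc j)
      then have "(par ^^ j) v \<in> ?K - {?r}" by simp
      then have "par ((par ^^ j) v) \<in> ?K" using p2 by blast
      then show ?case using lt[OF Suc.prems] by simp
    qed
    have it: "(?F ^^ j) v = (if j < kv then (par ^^ j) v else 0)" for j
    proof (induction j)
      case 0
      have "kv \<noteq> 0" using kv v by (cases kv) auto
      then show ?case by simp
    next
      case (Suc j)
      show ?case
      proof (cases "j < kv")
        case True
        have u: "(par ^^ j) v \<in> ?K - {?r}" using inK[OF True] .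
        have "(?F ^^ Suc j) v = ?F ((par ^^ j) v)" using Suc True by simp
        also have "\<dots> = (if par ((par ^^ j) v) = ?r then 0 else par ((par ^^ j) v))"
          using u unfolding F1of_def by simp
        also have "\<dots> = (if Suc j < kv then (par ^^ Suc j) v else 0)"
        proof (cases "Suc j < kv")
          case True
          then show ?thesis using lt[OF True] by simp
        next
          case False
          then have "Suc j = kv" using \<open>j < kv\<close> by simp
          then show ?thesis using kv by auto
        qed
        finally show ?thesis .
      next
        case False
        then have "(?F ^^ j) v = 0" using Suc by simp
        moreover have "?F 0 = 0" using out V0 Kp_props(1) by blast
        ultimately show ?thesis using False by simp
      qed
    qed
    show ?thesis using it[of kv] by auto
  qed
  show ?thesis unfolding forestsOn_def using out inn acyc by blast
qed

lemma glue_of: "glue V (Kof V par m) (rootof par m) (F1of V par m) (F2of V par m) = par"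
proof
  fix v
  let ?K = "Kof V par m" and ?r = "rootof par m"
  show "glue V ?K ?r (F1of V par m) (F2of V par m) v = par v"
  proof (cases "v \<in> V - ?K")
    case True then show ?thesis unfolding glue_def F2of_def by simp
  next
    case nVK: False
    show ?thesis
    proof (cases "v \<in> ?K - {?r}")
      case True
      have "par v \<noteq> 0" using p2(2)[OF True] .
      then show ?thesis using True nVK unfolding glue_def F1of_def by auto
    next
      case False
      then have "v \<notin> V \<or> v = ?r" using nVK by blast
      then have "par v = 0" using rt_props(2) forestsOn_D(2)[OF P V0] by blast
      then show ?thesis using False nVK unfolding glue_def by (simp only: if_False)
    qed
  qed
qed

end


lemma F1of_G:
  assumes KV: "K \<subseteq> V" and rK: "r \<in> K" and F1: "F1 \<in> forestsOn (K - {r})"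
    and F2: "F2 \<in> forestsOn (V - K)" and V0: "0 \<notin> V" and mK: "m \<in> K"
  shows "F1of V (glue V K r F1 F2) m = F1" "F2of V (glue V K r F1 F2) m = F2"
    "Kof V (glue V K r F1 F2) m = K" "rootof (glue V K r F1 F2) m = r"
proof -
  have rt: "rootof (glue V K r F1 F2) m = r" by (rule rootof_G[OF KV rK F1 F2 V0 mK])
  have Ko: "Kof V (glue V K r F1 F2) m = K" unfolding Kof_def rt by (rule Kof_G[OF KV rK F1 F2 V0 mK])
  show "rootof (glue V K r F1 F2) m = r" "Kof V (glue V K r F1 F2) m = K" using rt Ko by auto
  show "F1of V (glue V K r F1 F2) m = F1"
  proof
    fix v
    show "F1of V (glue V K r F1 F2) m v = F1 v"
    proof (cases "v \<in> K - {r}")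
      case True
      have g: "glue V K r F1 F2 v = (if F1 v = 0 then r else F1 v)" by (rule G_K[OF KV rK F1 F2 V0 True])
      have "F1 v \<in> insert 0 (K - {r})" by (rule F1_in[OF KV rK F1 F2 V0 True])
      then have "F1 v \<noteq> r" using r0[OF KV rK F1 F2 V0] by blast
      then show ?thesis unfolding F1of_def rt Ko using True g by auto
    next
      case False
      have "F1 v = 0" by (rule F1_out[OF KV rK F1 F2 V0 False])
      then show ?thesis unfolding F1of_def rt Ko using False by (simp only: if_False)
    qed
  qed
  show "F2of V (glue V K r F1 F2) m = F2"
  proof
    fix v
    show "F2of V (glue V K r F1 F2) m v = F2 v"
    proof (cases "v \<in> V - K")
      case True
      then show ?thesis unfolding F2of_def Ko using G_VK[OF KV rK F1 F2 V0 True] by simp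
    next
      case False
      have "F2 v = 0" using F2 False unfolding forestsOn_def by blast
      then show ?thesis unfolding F2of_def Ko using False by (simp only: if_False)
    qed
  qed
qed

lemma FW_rec:
  fixes c :: "'a::comm_semiring_1" and q :: "nat \<Rightarrow> 'a"
  assumes fin: "finite V" and V0: "0 \<notin> V" and mV: "m \<in> V"
  shows "FW c q V = (\<Sum>K\<in>{K. K \<subseteq> V \<and> m \<in> K}. \<Sum>r\<in>K.
            c * q (card {x\<in>K. x < r}) * FW 1 q (K - {r}) * FW c q (V - K))"
proof -
  define T where "T = (SIGMA K:{K. K \<subseteq> V \<and> m \<in> K}. SIGMA r:K. forestsOn (K - {r}) \<times> forestsOn (V - K))"
  define Phi where "Phi = (\<lambda>(K, r, F1, F2). glue V K r F1 F2)"
  define Psi where "Psi = (\<lambda>par. (Kof V par m, rootof par m, F1of V par m, F2of V par m))"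
  define w1 where "w1 = (\<lambda>K r F1. (\<Prod>v\<in>K - {r}. q (invV (K - {r}) F1 v)))"
  define w2 where "w2 = (\<lambda>K F2. (\<Prod>v\<in>V - K. q (invV (V - K) F2 v)) * c ^ card {v\<in>V - K. F2 v = 0})"
  define g where "g = (\<lambda>(K, r, F1, F2). c * q (card {x\<in>K. x < r}) * w1 K r F1 * w2 K F2)"
  have "FW c q V = (\<Sum>t\<in>T. g t)"
    unfolding FW_def
  proof (rule sum.reindex_bij_witness[where i = Psi and j = Phi, symmetric])
    fix t assume "t \<in> T"
    then obtain K r F1 F2 where t: "t = (K, r, F1, F2)" and KV: "K \<subseteq> V" and mK: "m \<in> K" and rK: "r \<in> K"
      and F1: "F1 \<in> forestsOn (K - {r})" and F2: "F2 \<in> forestsOn (V - K)"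
      unfolding T_def by auto
    show "Psi (Phi t) = t" unfolding t Phi_def Psi_def using F1of_G[OF KV rK F1 F2 V0 mK] by simp
    show "Phi t \<in> forestsOn V" unfolding t Phi_def using G_forest[OF KV rK F1 F2 V0] by simp
    show "(\<Prod>v\<in>V. q (invV V (Phi t) v)) * c ^ card {v\<in>V. Phi t v = 0} = g t"
      unfolding t Phi_def g_def w1_def w2_def using weight_G[OF KV rK F1 F2 V0 fin] by simp
  next
    fix par assume par: "par \<in> forestsOn V"
    show "Phi (Psi par) = par" unfolding Phi_def Psi_def using glue_of[OF par V0 mV] by simp
    show "Psi par \<in> T" unfolding Psi_def T_def
      using Kp_props[OF par V0 mV] F1of_forest[OF par V0 mV] F2of_forest[OF par V0 mV] by auto
  qed
  also have "\<dots> = (\<Sum>K\<in>{K. K \<subseteq> V \<and> m \<in> K}. \<Sum>r\<in>K. \<Sum>(F1, F2)\<in>forestsOn (K - {r}) \<times> forestsOn (V - K).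
       c * q (card {x\<in>K. x < r}) * w1 K r F1 * w2 K F2)"
  proof -
    let ?A = "{K. K \<subseteq> V \<and> m \<in> K}"
    let ?B = "\<lambda>K. SIGMA r:K. forestsOn (K - {r}) \<times> forestsOn (V - K)"
    have "?A \<subseteq> Pow V" by blast
    then have fA: "finite ?A" using fin by (simp add: finite_subset)
    have fK: "finite K" if "K \<in> ?A" for K using that fin finite_subset by blast
    have fB: "\<forall>K\<in>?A. finite (?B K)"
    proof
      fix K assume K: "K \<in> ?A"
      have "finite (forestsOn (K - {r}) \<times> forestsOn (V - K))" for r
        using fK[OF K] fin by (simp add: finite_forestsOn)
      have "finite (forestsOn (K - {r}))" "finite (forestsOn (V - K))" for r
        using fK[OF K] fin by (simp_all add: finite_forestsOn)
      then show "finite (?B K)" using fK[OF K] by (intro finite_SigmaI) auto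
    qed
    have s1: "(\<Sum>t\<in>T. g t) = (\<Sum>K\<in>?A. \<Sum>u\<in>?B K. g (K, u))"
      unfolding T_def using sum.Sigma[OF fA fB, of "\<lambda>K u. g (K, u)"] by simp
    have s2: "(\<Sum>u\<in>?B K. g (K, u)) = (\<Sum>r\<in>K. \<Sum>(F1, F2)\<in>forestsOn (K - {r}) \<times> forestsOn (V - K).
       c * q (card {x\<in>K. x < r}) * w1 K r F1 * w2 K F2)" if K: "K \<in> ?A" for K
    proof -
      have fC: "\<forall>r\<in>K. finite (forestsOn (K - {r}) \<times> forestsOn (V - K))"
        using fK[OF K] fin by (simp add: finite_forestsOn)
      show ?thesis using sum.Sigma[OF fK[OF K] fC, of "\<lambda>r u. g (K, r, u)"]
        by (simp add: g_def split_def)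
    qed
    show ?thesis using s1 s2 by simp
  qed
  also have "\<dots> = (\<Sum>K\<in>{K. K \<subseteq> V \<and> m \<in> K}. \<Sum>r\<in>K.
            c * q (card {x\<in>K. x < r}) * FW 1 q (K - {r}) * FW c q (V - K))"
  proof (intro sum.cong refl)
    fix K r
    have "(\<Sum>(F1, F2)\<in>forestsOn (K - {r}) \<times> forestsOn (V - K). c * q (card {x\<in>K. x < r}) * w1 K r F1 * w2 K F2)
       = c * q (card {x\<in>K. x < r}) * ((\<Sum>F1\<in>forestsOn (K - {r}). w1 K r F1) * (\<Sum>F2\<in>forestsOn (V - K). w2 K F2))"
      by (simp add: sum.cartesian_product[symmetric] sum_product sum_distrib_left ac_simps)
    also have "\<dots> = c * q (card {x\<in>K. x < r}) * FW 1 q (K - {r}) * FW c q (V - K)"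
      unfolding FW_def w1_def w2_def by (simp add: ac_simps)
    finally show "(\<Sum>(F1, F2)\<in>forestsOn (K - {r}) \<times> forestsOn (V - K). c * q (card {x\<in>K. x < r}) * w1 K r F1 * w2 K F2)
       = c * q (card {x\<in>K. x < r}) * FW 1 q (K - {r}) * FW c q (V - K)" .
  qed
  finally show ?thesis .
qed


lemma rank_sum:
  fixes q :: "nat \<Rightarrow> 'a::comm_semiring_1" and K :: "nat set"
  assumes fin: "finite K"
  shows "(\<Sum>r\<in>K. q (card {x\<in>K. x < r})) = (\<Sum>j<card K. q j)"
proof -
  define f where "f = (\<lambda>r. card {x\<in>K. x < r})"
  have mono: "f r < f r'" if "r \<in> K" "r < r'" for r r'
  proof -
    have "{x\<in>K. x < r} \<subseteq> {x\<in>K. x < r'}" using that(2) by auto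
    moreover have "r \<in> {x\<in>K. x < r'}" "r \<notin> {x\<in>K. x < r}" using that by auto
    ultimately have "{x\<in>K. x < r} \<subset> {x\<in>K. x < r'}" by blast
    then show ?thesis unfolding f_def using fin by (intro psubset_card_mono) auto
  qed
  have inj: "inj_on f K"
  proof (rule inj_onI)
    fix a b assume ab: "a \<in> K" "b \<in> K" "f a = f b"
    show "a = b"
    proof (rule ccontr)
      assume "a \<noteq> b"
      then consider "a < b" | "b < a" using linorder_neqE_nat by blast
      then show False
      proof cases
        case 1 then show False using mono[OF ab(1) 1] ab(3) by simp
      next
        case 2 then show False using mono[OF ab(2) 2] ab(3) by simp
      qed
    qed
  qed
  have sub: "f ` K \<subseteq> {..<card K}"
  proof
    fix y assume "y \<in> f ` K"
    then obtain r where r: "r \<in> K" "y = f r" by blast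
    have "{x\<in>K. x < r} \<subseteq> K" by auto
    moreover have "r \<notin> {x\<in>K. x < r}" by simp
    ultimately have "{x\<in>K. x < r} \<subset> K" using r(1) by blast
    then have "card {x\<in>K. x < r} < card K" using fin by (intro psubset_card_mono) auto
    then show "y \<in> {..<card K}" using r unfolding f_def by simp
  qed
  have "card (f ` K) = card {..<card K}" using card_image[OF inj] by simp
  then have img: "f ` K = {..<card K}" using sub by (intro card_subset_eq) auto
  have "(\<Sum>r\<in>K. q (f r)) = (\<Sum>j\<in>f ` K. q j)" using sum.reindex[OF inj, of q] by simp
  then show ?thesis unfolding img by (simp add: f_def)
qed

lemma subset_sum:
  fixes h :: "nat \<Rightarrow> 'a::comm_semiring_1"
  assumes fin: "finite V" and mV: "m \<in> V"
  shows "(\<Sum>K\<in>{K. K \<subseteq> V \<and> m \<in> K}. h (card K)) = (\<Sum>k\<in>{1..card V}. of_nat (card V - 1 choose (k - 1)) * h k)"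
proof -
  let ?A = "V - {m}"
  have finA: "finite ?A" using fin by simp
  have cA: "card ?A = card V - 1" using fin mV by simp
  have inj: "inj_on (insert m) (Pow ?A)" unfolding inj_on_def by blast
  have img: "insert m ` Pow ?A = {K. K \<subseteq> V \<and> m \<in> K}"
  proof (intro set_eqI iffI)
    fix K assume "K \<in> {K. K \<subseteq> V \<and> m \<in> K}"
    then have "K = insert m (K - {m})" "K - {m} \<in> Pow ?A" by auto
    then show "K \<in> insert m ` Pow ?A" by blast
  qed (use mV in auto)
  have "(\<Sum>K\<in>{K. K \<subseteq> V \<and> m \<in> K}. h (card K)) = (\<Sum>K'\<in>Pow ?A. h (card (insert m K')))"
    unfolding img[symmetric] by (rule sum.reindex[OF inj, unfolded comp_def])
  also have "\<dots> = (\<Sum>K'\<in>Pow ?A. h (Suc (card K')))"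
  proof (rule sum.cong[OF refl])
    fix K' assume "K' \<in> Pow ?A"
    then have "m \<notin> K'" "finite K'" using finA finite_subset by auto
    then show "h (card (insert m K')) = h (Suc (card K'))" by simp
  qed
  also have "\<dots> = (\<Sum>k\<in>{..card ?A}. \<Sum>K'\<in>{K'\<in>Pow ?A. card K' = k}. h (Suc (card K')))"
    using finA by (intro sum.group[symmetric]) (auto simp: card_mono)
  also have "\<dots> = (\<Sum>k\<in>{..card ?A}. of_nat (card ?A choose k) * h (Suc k))"
  proof (rule sum.cong[OF refl])
    fix k
    have "(\<Sum>K'\<in>{K'\<in>Pow ?A. card K' = k}. h (Suc (card K'))) = (\<Sum>K'\<in>{K'\<in>Pow ?A. card K' = k}. h (Suc k))"
      by (rule sum.cong) auto
    also have "\<dots> = of_nat (card {K'\<in>Pow ?A. card K' = k}) * h (Suc k)" by simp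
    also have "card {K'\<in>Pow ?A. card K' = k} = card ?A choose k"
    proof -
      have "{K'\<in>Pow ?A. card K' = k} = {K'. K' \<subseteq> ?A \<and> card K' = k}" by auto
      then show ?thesis using n_subsets[OF finA, of k] by simp
    qed
    finally show "(\<Sum>K'\<in>{K'\<in>Pow ?A. card K' = k}. h (Suc (card K'))) = of_nat (card ?A choose k) * h (Suc k)" .
  qed
  also have "\<dots> = (\<Sum>k\<in>{1..card V}. of_nat (card V - 1 choose (k - 1)) * h k)"
  proof -
    have cV: "card V = Suc (card ?A)" using fin mV cA by (metis card_Suc_Diff1)
    have "(\<Sum>k\<in>{1..card V}. of_nat (card V - 1 choose (k - 1)) * h k)
        = (\<Sum>k\<in>Suc ` {..card ?A}. of_nat (card ?A choose (k - 1)) * h k)"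
    proof -
      have "{1..card V} = Suc ` {..card ?A}" unfolding cV by (rule image_Suc_atMost[symmetric])
      then show ?thesis using cA by simp
    qed
    also have "\<dots> = (\<Sum>k\<in>{..card ?A}. of_nat (card ?A choose k) * h (Suc k))"
      by (subst sum.reindex) auto
    finally show ?thesis by simp
  qed
  finally show ?thesis .
qed


lemma FW_empty: "FW c q {} = 1"
proof -
  have "forestsOn {} = {\<lambda>v. 0}" unfolding forestsOn_def by auto
  then show ?thesis unfolding FW_def by simp
qed

lemma main_eq:
  fixes c :: "'a::comm_semiring_1" and q :: "nat \<Rightarrow> 'a"
  shows "finite V \<Longrightarrow> 0 \<notin> V \<Longrightarrow> FW c q V = W c q (card V) {1..card V}"
proof (induction "card V" arbitrary: V c rule: less_induct)
  case less
  show ?case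
  proof (cases "V = {}")
    case True
    then show ?thesis by (simp add: FW_empty)
  next
    case False
    then obtain m where mV: "m \<in> V" by blast
    define n where "n = card V"
    have n1: "1 \<le> n" using False less.prems unfolding n_def by (simp add: Suc_leI card_gt_0_iff)
    let ?A = "{K. K \<subseteq> V \<and> m \<in> K}"
    define h where "h = (\<lambda>k. c * (\<Sum>j<k. q j) * W 1 q (k - 1) {1..k - 1} * W c q (n - k) {1..n - k})"
    have "FW c q V = (\<Sum>K\<in>?A. \<Sum>r\<in>K. c * q (card {x\<in>K. x < r}) * FW 1 q (K - {r}) * FW c q (V - K))"
      by (rule FW_rec[OF less.prems mV])
    also have "\<dots> = (\<Sum>K\<in>?A. h (card K))"
    proof (rule sum.cong[OF refl])
      fix K assume K: "K \<in> ?A"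
      have finK: "finite K" using K less.prems(1) finite_subset by blast
      have "K \<noteq> {}" using K by blast
      then have "0 < card K" using finK by (simp add: card_gt_0_iff)
      moreover have "card K \<le> n" unfolding n_def using K less.prems(1) by (simp add: card_mono)
      ultimately have cK: "card K \<le> n" "1 \<le> card K" by simp_all
      have cVK: "card (V - K) = n - card K" unfolding n_def using K finK by (simp add: card_Diff_subset)
      have IH2: "FW c q (V - K) = W c q (n - card K) {1..n - card K}"
      proof -
        have "card (V - K) < card V" using K less.prems(1) by (intro psubset_card_mono) auto
        then show ?thesis using less.hyps[of "V - K" c] less.prems cVK by auto
      qed
      have IH1: "FW 1 q (K - {r}) = W 1 q (card K - 1) {1..card K - 1}" if r: "r \<in> K" for r
      proof -
        have c1: "card (K - {r}) = card K - 1" using r finK by simp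
        have "card (K - {r}) < card V" using c1 cK n_def by simp
        moreover have "0 \<notin> K - {r}" using K less.prems(2) by blast
        ultimately show ?thesis using less.hyps[of "K - {r}" 1] finK c1 by simp
      qed
      have "(\<Sum>r\<in>K. c * q (card {x\<in>K. x < r}) * FW 1 q (K - {r}) * FW c q (V - K))
          = (\<Sum>r\<in>K. q (card {x\<in>K. x < r}) * (c * W 1 q (card K - 1) {1..card K - 1} * W c q (n - card K) {1..n - card K}))"
        by (rule sum.cong[OF refl]) (simp add: IH1 IH2 ac_simps)
      also have "\<dots> = (\<Sum>r\<in>K. q (card {x\<in>K. x < r})) * (c * W 1 q (card K - 1) {1..card K - 1} * W c q (n - card K) {1..n - card K})"
        by (simp add: sum_distrib_right)
      also have "\<dots> = h (card K)" unfolding rank_sum[OF finK] h_def by (simp add: ac_simps)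
      finally show "(\<Sum>r\<in>K. c * q (card {x\<in>K. x < r}) * FW 1 q (K - {r}) * FW c q (V - K)) = h (card K)" .
    qed
    also have "\<dots> = (\<Sum>k\<in>{1..n}. of_nat (n - 1 choose (k - 1)) * h k)"
      unfolding n_def by (rule subset_sum[OF less.prems(1) mV])
    also have "\<dots> = W c q n {1..n}"
      unfolding PW_rec[OF n1] h_def by (rule sum.cong[OF refl]) (simp add: ac_simps)
    finally show ?thesis unfolding n_def .
  qed
qed

theorem theorem5p3:
  fixes n :: nat and q :: "nat \<Rightarrow> 'a::comm_semiring_1" and c :: 'a
  shows "(\<Sum>F\<in>rooted_forests n. monom_q n q (lead n F) * c ^ tree_count n F)
       = (\<Sum>P\<in>parking_functions n. monom_q n q (lucky P) * c ^ critic n P)"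
proof -
  have pt: "(x \<le> n) = (x \<in> insert 0 {1..n})" for x :: nat by auto
  have RF: "rooted_forests n = forestsOn {1..n}"
    unfolding rooted_forests_def forestsOn_def pt ..
  have "(\<Sum>F\<in>rooted_forests n. monom_q n q (lead n F) * c ^ tree_count n F) = FW c q {1..n}"
    unfolding FW_def RF
  proof (rule sum.cong[OF refl])
    fix F assume F: "F \<in> forestsOn {1..n}"
    have bound: "\<forall>v\<in>{1..n}. invV {1..n} F v \<le> n"
    proof
      fix v
      have "{x\<in>{1..n}. descendant F x v \<and> x < v} \<subseteq> {1..n}" by blast
      then have "card {x\<in>{1..n}. descendant F x v \<and> x < v} \<le> card {1..n}" by (intro card_mono) simp_all
      then show "invV {1..n} F v \<le> n" unfolding invV_def by simp
    qed
    have "monom_q n q (lead n F) = (\<Prod>i\<le>n. q i ^ card {v\<in>{1..n}. invV {1..n} F v = i})"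
      unfolding monom_q_def lead_def inv_f_def invV_def by simp
    also have "\<dots> = (\<Prod>v\<in>{1..n}. q (invV {1..n} F v))" by (rule monom_prod[OF _ bound]) simp
    finally show "monom_q n q (lead n F) * c ^ tree_count n F =
        (\<Prod>v\<in>{1..n}. q (invV {1..n} F v)) * c ^ card {v\<in>{1..n}. F v = 0}"
      unfolding tree_count_def by simp
  qed
  also have "\<dots> = W c q n {1..n}" using main_eq[of "{1..n}" c q] by simp
  also have "\<dots> = (\<Sum>P\<in>parking_functions n. monom_q n q (lucky P) * c ^ critic n P)"
    by (rule parking_side[symmetric])
  finally show ?thesis .
qed

end
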